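(* If $C$ is a conic through $O$, smooth at $O$, then for rational $s\ge1$ $$\Delta_{C,s_+}=\begin{cases}\Delta_{1,s,1}&\text{if }1\le s<2,\\ \Delta_{2,\frac s2,\frac12}&\text{if }s\ge2.\end{cases}$$ So there is only one mutation, at $s=2$, and $v_1(C,s)$ is minimal only when $s=1$ and $s=4$.
   Context: Work over $\mathbb C$; $x=X/Z$, $y=Y/Z$, $O=(0,0)$; $C$ tangent to $\{y=0\}$ at $O$, locally $x\mapsto(x,\xi(x))$, $\xi(0)=\xi'(0)=0$. For $f\ne0$ with $C$-expansion $f=\sum a_{ij}x^i(y-\xi(x))^j$, $v_1(C,s;f)=\min\{i+sj:a_{ij}\ne0\}$ and $v_+(C,s)(f)=(v_1(C,s;f),\min\{j:\exists i,\ a_{ij}\ne0,\ i+sj=v_1(C,s;f)\})$. $\Delta_{C,s_+}$ is the closure of the convex hull of $\{v_+(C,s)(F/Z^k)/k:k\ge1,\ F\ne0\text{ homogeneous of degree }k\}$. $\Delta_{a,b,c}$ is the triangle with vertices $(0,0),(a,0),(b,c)$. $\hat\mu(C,s)=\lim_k\frac1k\max\{v_1(C,s;F/Z^k)\}$ over nonzero homogeneous $F$ of degree $k$; $v_1(C,s)$ is minimal if $\hat\mu(C,s)=\sqrt s$. With $d=\deg C$, $\Delta_{C,s_+}$ mutates at $s_0\in(1,d^2)$ if it is not continuous there, where continuity at $s_0$ means: for every $\epsilon>0$ there is $\delta>0$ such that for all rational $s$ with $|s-s_0|<\delta$ every vertex of $\Delta_{C,s_+}$ is within distance $\epsilon$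 of $\partial\Delta_{C,s_{0+}}$. *)

theory Defs
  imports "HOL-Analysis.Analysis" "HOL-Computational_Algebra.Computational_Algebra"
begin

text \<open>Affine polynomials in x = X/Z, y = Y/Z are modelled as complex poly poly:
  a polynomial in y whose coefficients are polynomials in x.
  A nonzero homogeneous F of degree k corresponds to f = F/Z^k, a nonzero
  polynomial of total degree at most k.\<close>

type_synonym bipoly = "complex poly poly"

definition tdeg :: "bipoly \<Rightarrow> nat" where
  "tdeg f = Max (insert 0 {degree (coeff f q) + q | q. coeff f q \<noteq> 0})"

definition val_O :: "bipoly \<Rightarrow> complex" where
  "val_O f = poly.coeff (coeff f 0) 0"
definition dx_O :: "bipoly \<Rightarrow> complex" where
  "dx_O f = poly.coeff (coeff f 0) 1"
definition dy_O :: "bipoly \<Rightarrow> complex" where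
  "dy_O f = poly.coeff (coeff f 1) 0"

definition subst_branch :: "complex fps \<Rightarrow> bipoly \<Rightarrow> complex fps" where
  "subst_branch xi f = (\<Sum>q\<le>degree f. fps_of_poly (coeff f q) * xi ^ q)"

text \<open>Coefficient a_ij of the C-expansion f = sum a_ij x^i (y - xi(x))^j.\<close>
definition cexp :: "complex fps \<Rightarrow> bipoly \<Rightarrow> nat \<Rightarrow> nat \<Rightarrow> complex" where
  "cexp xi f i j = (\<Sum>q\<le>degree f. of_nat (q choose j) *
       fps_nth (fps_of_poly (coeff f q) * xi ^ (q - j)) i)"

definition v1 :: "complex fps \<Rightarrow> real \<Rightarrow> bipoly \<Rightarrow> real" where
  "v1 xi s f = Inf {real i + s * real j | i j. cexp xi f i j \<noteq> 0}"

definition vplus :: "complex fps \<Rightarrow> real \<Rightarrow> bipoly \<Rightarrow> real \<times> real" where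
  "vplus xi s f = (v1 xi s f,
     real (LEAST j. \<exists>i. cexp xi f i j \<noteq> 0 \<and> real i + s * real j = v1 xi s f))"

definition Delta_plus :: "complex fps \<Rightarrow> real \<Rightarrow> (real \<times> real) set" where
  "Delta_plus xi s = closure (convex hull
     {scaleR (1 / real k) (vplus xi s f) | k f. k \<ge> 1 \<and> f \<noteq> 0 \<and> tdeg f \<le> k})"

definition triangle :: "real \<Rightarrow> real \<Rightarrow> real \<Rightarrow> (real \<times> real) set" where
  "triangle a b c = convex hull {(0,0), (a,0), (b,c)}"

definition muhat :: "complex fps \<Rightarrow> real \<Rightarrow> real" where
  "muhat xi s = lim (\<lambda>k. (1 / real k) *
       Sup {v1 xi s f | f. f \<noteq> 0 \<and> tdeg f \<le> k})"

definition v1_minimal :: "complex fps \<Rightarrow> real \<Rightarrow> bool" where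
  "v1_minimal xi s \<longleftrightarrow> muhat xi s = sqrt s"

definition Delta_continuous_at :: "complex fps \<Rightarrow> real \<Rightarrow> bool" where
  "Delta_continuous_at xi s0 \<longleftrightarrow>
     (\<forall>\<epsilon>>0. \<exists>\<delta>>0. \<forall>s\<in>\<rat>. \<bar>s - s0\<bar> < \<delta> \<longrightarrow>
        (\<forall>v. v extreme_point_of Delta_plus xi s \<longrightarrow>
             infdist v (frontier (Delta_plus xi s0)) < \<epsilon>))"

definition Delta_mutates_at :: "complex fps \<Rightarrow> nat \<Rightarrow> real \<Rightarrow> bool" where
  "Delta_mutates_at xi d s0 \<longleftrightarrow>
     s0 \<in> {1<..<real (d^2)} \<and> \<not> Delta_continuous_at xi s0"

end

theory Submission
  imports Defs
begin

unbundle no vec_syntax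


definition Cst :: "complex \<Rightarrow> bipoly" where "Cst c = [:[:c:]:]"
definition Xp :: bipoly where "Xp = [:[:0,1:]:]"
definition Yp :: bipoly where "Yp = [:0,1:]"
definition emb :: "complex poly \<Rightarrow> complex fps fps" where "emb p = fps_const (fps_of_poly p)"
definition Yv :: "complex fps \<Rightarrow> complex fps fps" where "Yv xi = fps_const xi + fps_X"
definition EE :: "complex fps \<Rightarrow> bipoly \<Rightarrow> complex fps fps" where
  "EE xi f = poly (map_poly emb f) (Yv xi)"

lemma emb_0[simp]: "emb 0 = 0" by (simp add: emb_def)
lemma emb_1[simp]: "emb 1 = 1" by (simp add: emb_def)
lemma emb_add: "emb (a + b) = emb a + emb b" by (simp add: emb_def fps_of_poly_add)
lemma emb_mult: "emb (a * b) = emb a * emb b" by (simp add: emb_def fps_of_poly_mult)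
lemma emb_eq0: "emb a = 0 \<longleftrightarrow> a = 0"
  by (simp add: emb_def)

lemma EE_pCons: "EE xi (pCons a p) = emb a + Yv xi * EE xi p"
  by (cases "a = 0 \<and> p = 0") (auto simp: EE_def map_poly_pCons)

lemma EE_0[simp]: "EE xi 0 = 0" by (simp add: EE_def)

lemma EE_add: "EE xi (p + q) = EE xi p + EE xi q"
proof (induction p arbitrary: q)
  case 0 then show ?case by simp
next
  case (pCons a p)
  show ?case
  proof (cases q)
    case (pCons b q')
    then show ?thesis using pCons.IH[of q'] by (simp add: EE_pCons emb_add algebra_simps)
  qed
qed

lemma EE_smult: "EE xi (smult a p) = emb a * EE xi p"
  by (induction p) (auto simp: EE_pCons emb_mult algebra_simps)

lemma EE_mult: "EE xi (p * q) = EE xi p * EE xi q"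
  by (induction p) (auto simp: EE_pCons EE_add EE_smult algebra_simps)

lemma EE_const: "EE xi [:a:] = emb a"
  using EE_pCons[of xi a 0] by simp

lemma EE_1[simp]: "EE xi 1 = 1"
  by (simp add: EE_const one_pCons emb_def)

lemma EE_power: "EE xi (p ^ n) = EE xi p ^ n"
  by (induction n) (auto simp: EE_mult)

lemma EE_sum: "EE xi (sum f S) = (\<Sum>t\<in>S. EE xi (f t))"
  by (induction S rule: infinite_finite_induct) (auto simp: EE_add)

lemma EE_Cst: "EE xi (Cst c) = fps_const (fps_const c)"
  by (simp add: Cst_def EE_const emb_def fps_of_poly_const)

lemma EE_Xp: "EE xi Xp = fps_const fps_X"
  by (simp add: Xp_def EE_const emb_def)

lemma EE_Yp: "EE xi Yp = Yv xi"
  by (simp add: Yp_def EE_pCons EE_const)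

lemma EE_diff: "EE xi (p - q) = EE xi p - EE xi q"
  by (metis EE_add add_diff_cancel_left' diff_add_cancel)

lemma EE_sum_form: "EE xi f = (\<Sum>q\<le>degree f. emb (coeff f q) * Yv xi ^ q)"
  unfolding EE_def poly_altdef by (simp add: degree_map_poly emb_eq0 coeff_map_poly)

lemma nth_ofnat_mult: "(of_nat m * b :: 'a::comm_ring_1 fps) $ i = of_nat m * b $ i"
  by (metis fps_mult_left_const_nth fps_of_nat)

lemma Yv_pow_nth: "(Yv xi ^ q) $ j = of_nat (q choose j) * xi ^ (q - j)"
proof -
  have "Yv xi ^ q = (\<Sum>k\<le>q. of_nat (q choose k) * fps_X ^ k * fps_const xi ^ (q - k))"
    unfolding Yv_def by (subst add.commute) (rule binomial_ring)
  then have "(Yv xi ^ q) $ j = (\<Sum>k\<le>q. (of_nat (q choose k) * fps_X ^ k * fps_const xi ^ (q - k)) $ j)"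
    by (simp add: fps_sum_nth)
  also have "\<dots> = (\<Sum>k\<le>q. if k = j then of_nat (q choose k) * xi^(q-k) else 0)"
  proof (rule sum.cong)
    fix k assume "k \<in> {..q}"
    have "(of_nat (q choose k) * fps_X ^ k * fps_const xi ^ (q - k)) $ j
        = of_nat (q choose k) * (fps_X ^ k * fps_const (xi ^ (q - k))) $ j"
      by (simp only: mult.assoc nth_ofnat_mult fps_const_power)
    also have "\<dots> = (if k = j then of_nat (q choose k) * xi^(q-k) else 0)"
      by (simp add: fps_X_power_mult_nth)
    finally show "(of_nat (q choose k) * fps_X ^ k * fps_const xi ^ (q - k)) $ j = (if k = j then of_nat (q choose k) * xi^(q-k) else 0)" .
  qed simp
  also have "\<dots> = of_nat (q choose j) * xi ^ (q - j)"
    by (simp add: sum.delta')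
  finally show ?thesis .
qed

lemma EE_entry: "EE xi f $ j $ i = cexp xi f i j"
proof -
  have "EE xi f $ j $ i = (\<Sum>q\<le>degree f. (fps_of_poly (coeff f q) * (of_nat (q choose j) * xi ^ (q - j))) $ i)"
    unfolding EE_sum_form by (simp add: fps_sum_nth emb_def Yv_pow_nth)
  also have "\<dots> = cexp xi f i j"
    unfolding cexp_def
    by (rule sum.cong) (simp_all add: mult.left_commute[of _ "of_nat _"] nth_ofnat_mult)
  finally show ?thesis .
qed

lemma subst_branch_EE: "subst_branch xi f = EE xi f $ 0"
  unfolding subst_branch_def EE_sum_form by (simp add: fps_sum_nth emb_def Yv_pow_nth)

lemma tdeg_le_iff: "tdeg f \<le> k \<longleftrightarrow> (\<forall>q. coeff f q \<noteq> 0 \<longrightarrow> degree (coeff f q) + q \<le> k)"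
proof -
  have "{degree (coeff f q) + q | q. coeff f q \<noteq> 0} \<subseteq> (\<lambda>q. degree (coeff f q) + q) ` {..degree f}"
    using le_degree by fastforce
  then have fin: "finite {degree (coeff f q) + q | q. coeff f q \<noteq> 0}"
    using finite_subset by blast
  show ?thesis unfolding tdeg_def using fin by (auto simp: Max_le_iff)
qed

lemma tdeg_ge: "coeff f q \<noteq> 0 \<Longrightarrow> degree (coeff f q) + q \<le> tdeg f"
  using tdeg_le_iff[of f "tdeg f"] by auto

lemma tdeg_mult: "tdeg (f * g) \<le> tdeg f + tdeg g"
  unfolding tdeg_le_iff
proof (intro allI impI)
  fix q assume ne: "coeff (f * g) q \<noteq> 0"
  have cm: "coeff (f * g) q = (\<Sum>i\<le>q. coeff f i * coeff g (q - i))" by (rule coeff_mult)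
  obtain i where i: "i \<le> q" "coeff f i * coeff g (q - i) \<noteq> 0"
    using ne unfolding cm by (metis (no_types, lifting) atMost_iff sum.neutral)
  have "i \<le> tdeg f" "q - i \<le> tdeg g" using i tdeg_ge[of f i] tdeg_ge[of g "q - i"] by auto
  then have qle: "q \<le> tdeg f + tdeg g" using i by linarith
  have "degree (coeff (f * g) q) \<le> tdeg f + tdeg g - q"
    unfolding cm
  proof (rule degree_sum_le)
    fix i' assume "i' \<in> {..q}"
    show "degree (coeff f i' * coeff g (q - i')) \<le> tdeg f + tdeg g - q"
    proof (cases "coeff f i' = 0 \<or> coeff g (q - i') = 0")
      case True then show ?thesis by auto
    next
      case False
      then have a: "degree (coeff f i') + i' \<le> tdeg f" and b: "degree (coeff g (q - i')) + (q - i') \<le> tdeg g"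
        using tdeg_ge by auto
      have "degree (coeff f i' * coeff g (q - i')) \<le> degree (coeff f i') + degree (coeff g (q - i'))"
        by (rule degree_mult_le)
      then show ?thesis using a b \<open>i' \<in> {..q}\<close> by auto
    qed
  qed simp
  then show "degree (coeff (f * g) q) + q \<le> tdeg f + tdeg g" using qle by linarith
qed

lemma tdeg_power: "tdeg (f ^ n) \<le> n * tdeg f"
proof (induction n)
  case 0
  have "tdeg (1::bipoly) \<le> 0" unfolding tdeg_le_iff by (auto simp: coeff_1)
  then show ?case by simp
next
  case (Suc n)
  then show ?case using tdeg_mult[of f "f^n"] by simp
qed

lemma tdeg_Xp: "tdeg Xp \<le> 1"
  unfolding tdeg_le_iff Xp_def by (auto simp: coeff_pCons split: nat.splits)

lemma tdeg_Yp: "tdeg Yp \<le> 1"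
  unfolding tdeg_le_iff Yp_def by (auto simp: coeff_pCons split: nat.splits)

lemma tdeg_Cst: "tdeg (Cst c) \<le> 0"
  unfolding tdeg_le_iff Cst_def by (auto simp: coeff_pCons split: nat.splits)

lemma tdeg_induct:
  assumes add: "\<And>k f g. P k f \<Longrightarrow> P k g \<Longrightarrow> P k (f+g)"
    and cst: "\<And>k c. P k (Cst c)"
    and xm: "\<And>k f. P k f \<Longrightarrow> P (Suc k) (Xp*f)"
    and ym: "\<And>k f. P k f \<Longrightarrow> P (Suc k) (Yp*f)"
  shows "tdeg f \<le> k \<Longrightarrow> P k f"
proof -
  have base: "degree p \<le> k \<Longrightarrow> P k [:p:]" for p k
  proof (induction p arbitrary: k)
    case 0 then show ?case using cst[of k 0] by (simp add: Cst_def)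
  next
    case (pCons a p)
    show ?case
    proof (cases "p = 0")
      case True then show ?thesis using cst[of k a] by (simp add: Cst_def)
    next
      case False
      then have "degree (pCons a p) = Suc (degree p)" by simp
      then obtain k' where k: "k = Suc k'" "degree p \<le> k'" using pCons.prems
        by (metis Suc_le_D Suc_le_mono)
      have "P k (Cst a + Xp * [:p:])" using add[OF cst xm[OF pCons.IH[OF k(2)]]] k(1) by simp
      moreover have "Cst a + Xp * [:p:] = [:pCons a p:]"
        by (simp add: Cst_def Xp_def)
      ultimately show ?thesis by simp
    qed
  qed
  show "tdeg f \<le> k \<Longrightarrow> P k f"
  proof (induction f arbitrary: k)
    case 0 then show ?case using cst[of k 0] by (simp add: Cst_def)
  next
    case (pCons p g)
    have dp: "degree p \<le> k"
    proof (cases "p = 0")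
      case False then show ?thesis using tdeg_ge[of "pCons p g" 0] pCons.prems by simp
    qed simp
    show ?case
    proof (cases "g = 0")
      case True then show ?thesis using base[OF dp] by simp
    next
      case False
      have gk: "\<forall>q. coeff g q \<noteq> 0 \<longrightarrow> degree (coeff g q) + Suc q \<le> k"
        using pCons.prems unfolding tdeg_le_iff by (metis coeff_pCons_Suc)
      obtain q0 where "coeff g q0 \<noteq> 0" using False by (metis leading_coeff_0_iff)
      then obtain k' where k': "k = Suc k'" using gk by (metis Suc_le_D add_Suc_right)
      have "tdeg g \<le> k'" unfolding tdeg_le_iff using gk k' by auto
      then have "P k (Yp * g)" using ym[OF pCons.IH] k' by simp
      then have "P k ([:p:] + Yp * g)" using add base[OF dp] by blast
      moreover have "[:p:] + Yp * g = pCons p g" by (simp add: Yp_def)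
      ultimately show ?thesis by simp
    qed
  qed
qed


definition ge :: "real \<Rightarrow> complex fps fps \<Rightarrow> real \<Rightarrow> bool" where
  "ge s F v \<longleftrightarrow> (\<forall>i j. real i + s * real j < v \<longrightarrow> F $ j $ i = 0)"

definition LL :: "real \<Rightarrow> real \<Rightarrow> complex fps fps \<Rightarrow> complex fps fps" where
  "LL s v F = Abs_fps (\<lambda>j. Abs_fps (\<lambda>i. if real i + s * real j = v then F $ j $ i else 0))"

lemma LL_nth: "LL s v F $ j $ i = (if real i + s * real j = v then F $ j $ i else 0)"
  by (simp add: LL_def)

lemma mult_nth2: "(F * G :: complex fps fps) $ j $ i = (\<Sum>j1=0..j. \<Sum>i1=0..i. F $ j1 $ i1 * G $ (j - j1) $ (i - i1))"
  by (simp add: fps_mult_nth fps_sum_nth)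

lemma ge_mult:
  fixes F G :: "complex fps fps"
  assumes F: "ge s F a" and G: "ge s G b"
  shows "ge s (F * G) (a + b)"
  unfolding ge_def
proof (intro allI impI)
  fix i j assume lt: "real i + s * real j < a + b"
  show "(F * G) $ j $ i = 0"
    unfolding mult_nth2
  proof (intro sum.neutral ballI)
    fix j1 i1 assume j1: "j1 \<in> {0..j}" and i1: "i1 \<in> {0..i}"
    show "F $ j1 $ i1 * G $ (j - j1) $ (i - i1) = 0"
    proof (cases "real i1 + s * real j1 < a")
      case True then show ?thesis using F unfolding ge_def by simp
    next
      case False
      have "real (i - i1) + s * real (j - j1) = (real i + s * real j) - (real i1 + s * real j1)"
        using i1 j1 by (simp add: of_nat_diff algebra_simps)
      also have "\<dots> < b" using False lt by linarith
      finally show ?thesis using G unfolding ge_def by simp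
    qed
  qed
qed

lemma LL_mult:
  fixes F G :: "complex fps fps"
  assumes F: "ge s F a" and G: "ge s G b"
  shows "LL s (a + b) (F * G) = LL s a F * LL s b G"
proof (rule fps_ext, rule fps_ext)
  fix j i
  have trm: "(if real i + s * real j = a + b then F $ j1 $ i1 * G $ (j - j1) $ (i - i1) else 0)
      = (if real i1 + s * real j1 = a then F $ j1 $ i1 else 0) *
        (if real (i - i1) + s * real (j - j1) = b then G $ (j - j1) $ (i - i1) else 0)"
    if i1: "i1 \<le> i" and j1: "j1 \<le> j" for i1 j1
  proof -
    have sum: "real (i - i1) + s * real (j - j1) = (real i + s * real j) - (real i1 + s * real j1)"
      using i1 j1 by (simp add: of_nat_diff algebra_simps)
    have F0: "real i1 + s * real j1 < a \<Longrightarrow> F $ j1 $ i1 = 0" using F unfolding ge_def by simp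
    have G0: "real (i - i1) + s * real (j - j1) < b \<Longrightarrow> G $ (j - j1) $ (i - i1) = 0"
      using G unfolding ge_def by simp
    show ?thesis
    proof (cases "real i1 + s * real j1 < a")
      case True then show ?thesis using F0 by auto
    next
      case False
      show ?thesis
      proof (cases "real i1 + s * real j1 = a")
        case True then show ?thesis using sum by auto
      next
        case False2: False
        then have gt: "real i1 + s * real j1 > a" using False by linarith
        show ?thesis
        proof (cases "real i + s * real j = a + b")
          case True
          then have "real (i - i1) + s * real (j - j1) < b" using sum gt by linarith
          then show ?thesis using G0 False2 by auto
        next
          case False then show ?thesis using False2 by auto
        qed
      qed
    qed
  qed
  have "LL s (a + b) (F * G) $ j $ i =
      (\<Sum>j1=0..j. \<Sum>i1=0..i. if real i + s * real j = a + b then F $ j1 $ i1 * G $ (j - j1) $ (i - i1) else 0)"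
    by (simp add: LL_nth mult_nth2)
  also have "\<dots> = (\<Sum>j1=0..j. \<Sum>i1=0..i. (if real i1 + s * real j1 = a then F $ j1 $ i1 else 0) *
        (if real (i - i1) + s * real (j - j1) = b then G $ (j - j1) $ (i - i1) else 0))"
    by (intro sum.cong refl) (use trm in auto)
  also have "\<dots> = (LL s a F * LL s b G) $ j $ i"
    by (simp add: LL_nth mult_nth2)
  finally show "LL s (a + b) (F * G) $ j $ i = (LL s a F * LL s b G) $ j $ i" .
qed

lemma ge_one: "s \<ge> 0 \<Longrightarrow> ge s 1 0"
  unfolding ge_def by (auto simp: fps_one_nth)

lemma LL_one: "LL s 0 1 = 1"
  by (intro fps_ext) (auto simp: LL_nth fps_one_nth)

lemma ge_power:
  fixes F :: "complex fps fps"
  assumes s: "s \<ge> 0" and F: "ge s F a"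
  shows "ge s (F ^ n) (real n * a) \<and> LL s (real n * a) (F ^ n) = (LL s a F) ^ n"
proof (induction n)
  case 0 then show ?case using ge_one[OF s] LL_one by simp
next
  case (Suc n)
  have e: "real (Suc n) * a = a + real n * a" by (simp add: algebra_simps)
  show ?case unfolding e using ge_mult[OF F Suc.IH[THEN conjunct1]] LL_mult[OF F Suc.IH[THEN conjunct1]]
    Suc.IH by simp
qed

lemma vplus_char:
  assumes ge: "ge s (EE xi f) v" and val: "real i0 + s * real j0 = v"
    and nz: "EE xi f $ j0 $ i0 \<noteq> 0"
    and low: "\<And>i j. j < j0 \<Longrightarrow> real i + s * real j = v \<Longrightarrow> EE xi f $ j $ i = 0"
  shows "v1 xi s f = v" "vplus xi s f = (v, real j0)"
proof -
  let ?A = "{real i + s * real j | i j. cexp xi f i j \<noteq> 0}"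
  have mem: "v \<in> ?A" using val nz by (auto simp: EE_entry)
  have lb: "\<And>x. x \<in> ?A \<Longrightarrow> v \<le> x"
    using ge unfolding ge_def by (auto simp: EE_entry not_less[symmetric])
  show v1: "v1 xi s f = v" unfolding v1_def using mem lb by (intro cInf_eq_minimum) auto
  have "(LEAST j. \<exists>i. cexp xi f i j \<noteq> 0 \<and> real i + s * real j = v1 xi s f) = j0"
  proof (rule Least_equality)
    show "\<exists>i. cexp xi f i j0 \<noteq> 0 \<and> real i + s * real j0 = v1 xi s f"
      using val nz v1 by (auto simp: EE_entry)
    fix j assume "\<exists>i. cexp xi f i j \<noteq> 0 \<and> real i + s * real j = v1 xi s f"
    then show "j0 \<le> j" using low v1 by (auto simp: EE_entry not_less[symmetric])
  qed
  then show "vplus xi s f = (v, real j0)" unfolding vplus_def v1 by simp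
qed

lemma cc_nth: "(fps_const (fps_const c) * (G :: complex fps fps)) $ j $ i = c * G $ j $ i"
  by simp

lemma comb:
  fixes T :: "'t set" and c :: "'t \<Rightarrow> complex" and G :: "'t \<Rightarrow> complex fps fps"
  assumes fin: "finite T" and geG: "\<And>t. t \<in> T \<Longrightarrow> ge s (G t) (\<phi> t)"
    and F: "F = (\<Sum>t\<in>T. fps_const (fps_const (c t)) * G t)"
    and v0: "v0 = Min (\<phi> ` {t\<in>T. c t \<noteq> 0})" and ne: "{t\<in>T. c t \<noteq> 0} \<noteq> {}"
  shows "ge s F v0"
    and "\<And>i j. real i + s * real j = v0 \<Longrightarrow>
           F $ j $ i = (\<Sum>t\<in>{t\<in>T. c t \<noteq> 0 \<and> \<phi> t = v0}. c t * LL s v0 (G t) $ j $ i)"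
proof -
  have Fn: "F $ j $ i = (\<Sum>t\<in>T. c t * G t $ j $ i)" for i j
    unfolding F by (simp add: fps_sum_nth)
  have finS: "finite {t\<in>T. c t \<noteq> 0}" using fin by simp
  have mn: "t \<in> T \<Longrightarrow> c t \<noteq> 0 \<Longrightarrow> v0 \<le> \<phi> t" for t
    unfolding v0 using finS by (intro Min_le) auto
  show "ge s F v0"
    unfolding ge_def
  proof (intro allI impI)
    fix i j assume lt: "real i + s * real j < v0"
    show "F $ j $ i = 0" unfolding Fn
    proof (intro sum.neutral ballI)
      fix t assume t: "t \<in> T"
      show "c t * G t $ j $ i = 0"
      proof (cases "c t = 0")
        case False
        then have "real i + s * real j < \<phi> t" using mn[OF t] lt by linarith
        then show ?thesis using geG[OF t] unfolding ge_def by simp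
      qed simp
    qed
  qed
  fix i j assume eq: "real i + s * real j = v0"
  have "F $ j $ i = (\<Sum>t\<in>{t\<in>T. c t \<noteq> 0 \<and> \<phi> t = v0}. c t * G t $ j $ i)"
    unfolding Fn
  proof (rule sum.mono_neutral_right)
    show "\<forall>t\<in>T - {t \<in> T. c t \<noteq> 0 \<and> \<phi> t = v0}. c t * G t $ j $ i = 0"
    proof
      fix t assume t: "t \<in> T - {t \<in> T. c t \<noteq> 0 \<and> \<phi> t = v0}"
      show "c t * G t $ j $ i = 0"
      proof (cases "c t = 0")
        case False
        then have "real i + s * real j < \<phi> t" using mn[of t] t eq by fastforce
        then show ?thesis using geG[of t] t unfolding ge_def by simp
      qed simp
    qed
  qed (use fin in auto)
  also have "\<dots> = (\<Sum>t\<in>{t\<in>T. c t \<noteq> 0 \<and> \<phi> t = v0}. c t * LL s v0 (G t) $ j $ i)"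
    by (rule sum.cong) (auto simp: LL_nth eq)
  finally show "F $ j $ i = (\<Sum>t\<in>{t\<in>T. c t \<noteq> 0 \<and> \<phi> t = v0}. c t * LL s v0 (G t) $ j $ i)" .
qed


lemma Cst_add: "Cst (a + b) = Cst a + Cst b" by (simp add: Cst_def)
lemma Cst_mult: "Cst (a * b) = Cst a * Cst b" by (simp add: Cst_def)
lemma Cst_0[simp]: "Cst 0 = 0" by (simp add: Cst_def)
lemma Cst_1[simp]: "Cst 1 = 1" by (simp add: Cst_def one_pCons)

definition inSp :: "('t \<Rightarrow> bipoly) \<Rightarrow> 't set \<Rightarrow> bipoly \<Rightarrow> bool" where
  "inSp g T f \<longleftrightarrow> (\<exists>c. f = (\<Sum>t\<in>T. Cst (c t) * g t))"

lemma inSp_0: "inSp g T 0"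
  unfolding inSp_def by (rule exI[of _ "\<lambda>_. 0"]) simp

lemma inSp_add: "inSp g T f1 \<Longrightarrow> inSp g T f2 \<Longrightarrow> inSp g T (f1 + f2)"
  unfolding inSp_def
proof (elim exE)
  fix c1 c2 assume "f1 = (\<Sum>t\<in>T. Cst (c1 t) * g t)" "f2 = (\<Sum>t\<in>T. Cst (c2 t) * g t)"
  then show "\<exists>c. f1 + f2 = (\<Sum>t\<in>T. Cst (c t) * g t)"
    by (intro exI[of _ "\<lambda>t. c1 t + c2 t"]) (simp add: Cst_add distrib_right sum.distrib)
qed

lemma inSp_scale: "inSp g T f \<Longrightarrow> inSp g T (Cst a * f)"
  unfolding inSp_def
proof (elim exE)
  fix c assume "f = (\<Sum>t\<in>T. Cst (c t) * g t)"
  then show "\<exists>c'. Cst a * f = (\<Sum>t\<in>T. Cst (c' t) * g t)"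
    by (intro exI[of _ "\<lambda>t. a * c t"]) (simp add: Cst_mult sum_distrib_left mult.assoc)
qed

lemma inSp_gen: "finite T \<Longrightarrow> t0 \<in> T \<Longrightarrow> inSp g T (g t0)"
  unfolding inSp_def
proof (intro exI[of _ "\<lambda>t. if t = t0 then 1 else 0"])
  assume "finite T" "t0 \<in> T"
  have "(\<Sum>t\<in>T. Cst (if t = t0 then 1 else 0) * g t) = (\<Sum>t\<in>T. if t = t0 then g t else 0)"
    by (rule sum.cong) auto
  also have "\<dots> = g t0" using \<open>finite T\<close> \<open>t0 \<in> T\<close> by (simp add: sum.delta')
  finally show "g t0 = (\<Sum>t\<in>T. Cst (if t = t0 then 1 else 0) * g t)" by simp
qed

lemma inSp_sum: "finite S \<Longrightarrow> (\<And>x. x \<in> S \<Longrightarrow> inSp g T (h x)) \<Longrightarrow> inSp g T (sum h S)"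
  by (induction S rule: finite_induct) (auto intro: inSp_add inSp_0)

lemma inSp_nonzero: "f = (\<Sum>t\<in>T. Cst (c t) * g t) \<Longrightarrow> f \<noteq> 0 \<Longrightarrow> {t\<in>T. c t \<noteq> 0} \<noteq> {}"
proof (rule ccontr)
  assume f: "f = (\<Sum>t\<in>T. Cst (c t) * g t)" and "f \<noteq> 0" and "\<not> {t\<in>T. c t \<noteq> 0} \<noteq> {}"
  then have "\<forall>t\<in>T. c t = 0" by auto
  then have "f = 0" unfolding f by (intro sum.neutral) auto
  then show False using \<open>f \<noteq> 0\<close> by simp
qed

lemma EE_comb: "EE xi (\<Sum>t\<in>T. Cst (c t) * g t) = (\<Sum>t\<in>T. fps_const (fps_const (c t)) * EE xi (g t))"
  by (simp add: EE_sum EE_mult EE_Cst)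

lemma Yv_nth: "Yv xi $ j = (if j = 0 then xi else 0) + (if j = 1 then 1 else 0)"
  by (simp add: Yv_def)

lemma ge_X: "ge s (fps_const fps_X) 1" unfolding ge_def by auto
lemma LL_X: "LL s 1 (fps_const fps_X) = fps_const fps_X"
  by (intro fps_ext) (auto simp: LL_nth)

lemma X_entry: "(fps_const (fps_X ^ a) * fps_X ^ b :: complex fps fps) $ j $ i = (if j = b \<and> i = a then 1 else 0)"
  by (simp add: fps_X_power_mult_right_nth)

definition monA :: "nat \<times> nat \<Rightarrow> bipoly" where "monA t = Xp ^ fst t * Yp ^ snd t"
definition TA :: "nat \<Rightarrow> (nat \<times> nat) set" where "TA k = {(a, b). a + b \<le> k}"

lemma finite_TA: "finite (TA k)"
  unfolding TA_def by (rule finite_subset[of _ "{..k} \<times> {..k}"]) auto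

lemma inA_all: assumes "tdeg f \<le> k" shows "inSp monA (TA k) f"
proof (rule tdeg_induct[where P = "\<lambda>k f. inSp monA (TA k) f", OF _ _ _ _ assms])
  fix k f g assume "inSp monA (TA k) f" "inSp monA (TA k) g"
  then show "inSp monA (TA k) (f + g)" by (rule inSp_add)
next
  fix k c
  have "inSp monA (TA k) (monA (0,0))" by (rule inSp_gen[OF finite_TA]) (auto simp: TA_def)
  then show "inSp monA (TA k) (Cst c)" using inSp_scale[of monA "TA k" "monA (0,0)" c] by (simp add: monA_def)
next
  fix k f assume "inSp monA (TA k) f"
  then obtain c where f: "f = (\<Sum>t\<in>TA k. Cst (c t) * monA t)" unfolding inSp_def by blast
  have "Xp * f = (\<Sum>t\<in>TA k. Cst (c t) * monA (Suc (fst t), snd t))"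
    unfolding f by (simp add: sum_distrib_left monA_def algebra_simps)
  also have "inSp monA (TA (Suc k)) \<dots>"
    by (intro inSp_sum finite_TA inSp_scale inSp_gen) (auto simp: TA_def)
  finally show "inSp monA (TA (Suc k)) (Xp * f)" .
next
  fix k f assume "inSp monA (TA k) f"
  then obtain c where f: "f = (\<Sum>t\<in>TA k. Cst (c t) * monA t)" unfolding inSp_def by blast
  have "Yp * f = (\<Sum>t\<in>TA k. Cst (c t) * monA (fst t, Suc (snd t)))"
    unfolding f by (simp add: sum_distrib_left monA_def algebra_simps)
  also have "inSp monA (TA (Suc k)) \<dots>"
    by (intro inSp_sum finite_TA inSp_scale inSp_gen) (auto simp: TA_def)
  finally show "inSp monA (TA (Suc k)) (Yp * f)" .
qed

lemma ge_Y_small: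
  assumes s: "0 < s" "s < 2" and xi0: "xi $ 0 = 0" and xi1: "xi $ 1 = 0"
  shows "ge s (Yv xi) s" "LL s s (Yv xi) = fps_X"
proof -
  have x: "i < 2 \<Longrightarrow> xi $ i = 0" for i using xi0 xi1 by (cases i) (auto simp: less_2_cases_iff)
  show "ge s (Yv xi) s"
    unfolding ge_def
  proof (intro allI impI)
    fix i j assume lt: "real i + s * real j < s"
    then have "j = 0" using s by (cases j) (auto simp: algebra_simps, smt (verit) of_nat_0_le_iff mult_nonneg_nonneg)
    moreover have "i < 2" using lt s \<open>j = 0\<close> by simp
    ultimately show "Yv xi $ j $ i = 0" using x by (simp add: Yv_nth)
  qed
  show "LL s s (Yv xi) = fps_X"
  proof (intro fps_ext)
    fix j i
    show "LL s s (Yv xi) $ j $ i = fps_X $ j $ i"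
    proof (cases "j = 0")
      case True then show ?thesis using x s by (auto simp: LL_nth Yv_nth)
    next
      case False
      show ?thesis
      proof (cases "j = 1")
        case True then show ?thesis using s by (auto simp: LL_nth Yv_nth)
      next
        case False
        then show ?thesis using \<open>j \<noteq> 0\<close> by (auto simp: LL_nth Yv_nth)
      qed
    qed
  qed
qed

lemma monA_lead:
  assumes s: "0 < s" "s < 2" and xi0: "xi $ 0 = 0" and xi1: "xi $ 1 = 0"
  shows "ge s (EE xi (monA (a, b))) (real a + s * real b)"
    "LL s (real a + s * real b) (EE xi (monA (a, b))) = fps_const (fps_X ^ a) * fps_X ^ b"
proof -
  have EEm: "EE xi (monA (a, b)) = fps_const fps_X ^ a * Yv xi ^ b"
    by (simp add: monA_def EE_mult EE_power EE_Xp EE_Yp)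
  note X = ge_power[OF _ ge_X, of s a] and Y = ge_power[OF _ ge_Y_small(1)[OF s xi0 xi1], of b]
  have e: "real a + s * real b = real a * 1 + real b * s" by simp
  show "ge s (EE xi (monA (a, b))) (real a + s * real b)"
    unfolding EEm e using ge_mult[OF X[THEN conjunct1] Y[THEN conjunct1]] s by simp
  show "LL s (real a + s * real b) (EE xi (monA (a, b))) = fps_const (fps_X ^ a) * fps_X ^ b"
    unfolding EEm e using LL_mult[OF X[THEN conjunct1] Y[THEN conjunct1]] X Y s
      LL_X ge_Y_small(2)[OF s xi0 xi1] by (simp add: fps_const_power)
qed

lemma monA_vplus:
  assumes s: "0 < s" "s < 2" and xi0: "xi $ 0 = 0" and xi1: "xi $ 1 = 0"
  shows "vplus xi s (monA (a, b)) = (real a + s * real b, real b)"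
proof (rule vplus_char(2)[OF monA_lead(1)[OF assms]])
  note L = monA_lead(2)[OF assms, of a b]
  have en: "real i + s * real j = real a + s * real b \<Longrightarrow> EE xi (monA (a, b)) $ j $ i = (if j = b \<and> i = a then 1 else 0)" for i j
    using arg_cong[OF L, of "\<lambda>F. F $ j $ i"] by (simp add: LL_nth X_entry)
  show "EE xi (monA (a, b)) $ b $ a \<noteq> 0" using en by simp
  show "\<And>i j. j < b \<Longrightarrow> real i + s * real j = real a + s * real b \<Longrightarrow> EE xi (monA (a, b)) $ j $ i = 0"
    using en by simp
qed simp

theorem thmA:
  assumes s: "0 < s" "s < 2" and xi0: "xi $ 0 = 0" and xi1: "xi $ 1 = 0"
    and f: "f \<noteq> 0" "tdeg f \<le> k"
  shows "\<exists>a b. a + b \<le> k \<and> vplus xi s f = (real a + s * real b, real b)"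
proof -
  obtain c where fc: "f = (\<Sum>t\<in>TA k. Cst (c t) * monA t)"
    using inA_all[OF f(2)] unfolding inSp_def by blast
  define \<phi> where "\<phi> t = real (fst t) + s * real (snd t)" for t :: "nat \<times> nat"
  define N where "N = {t\<in>TA k. c t \<noteq> 0}"
  have Nne: "N \<noteq> {}" using inSp_nonzero[OF fc f(1)] unfolding N_def .
  have finN: "finite N" unfolding N_def using finite_TA by simp
  define v0 where "v0 = Min (\<phi> ` N)"
  define S0 where "S0 = {t\<in>TA k. c t \<noteq> 0 \<and> \<phi> t = v0}"
  have S0N: "S0 = {t \<in> N. \<phi> t = v0}" unfolding S0_def N_def by auto
  have "v0 \<in> \<phi> ` N" unfolding v0_def using finN Nne by (intro Min_in) auto
  then have S0ne: "S0 \<noteq> {}" unfolding S0N by auto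
  have finS0: "finite S0" unfolding S0N using finN by simp
  define b0 where "b0 = Min (snd ` S0)"
  have "b0 \<in> snd ` S0" unfolding b0_def using finS0 S0ne by (intro Min_in) auto
  then obtain a0 where t0: "(a0, b0) \<in> S0" by auto
  have b0min: "t \<in> S0 \<Longrightarrow> b0 \<le> snd t" for t unfolding b0_def using finS0 by (intro Min_le) auto
  have geG: "ge s (EE xi (monA t)) (\<phi> t)" for t
    using monA_lead(1)[OF assms(1-4), of "fst t" "snd t"] by (simp add: \<phi>_def)
  have LLG: "t \<in> S0 \<Longrightarrow> LL s v0 (EE xi (monA t)) = fps_const (fps_X ^ fst t) * fps_X ^ snd t" for t
    using monA_lead(2)[OF assms(1-4), of "fst t" "snd t"] by (simp add: \<phi>_def S0_def)
  note C = comb[OF finite_TA, where s=s and G="\<lambda>t. EE xi (monA t)" and \<phi>=\<phi> and F="EE xi f" and c=c,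
      OF geG _ v0_def[unfolded N_def] Nne[unfolded N_def]]
  have EEf: "EE xi f = (\<Sum>t\<in>TA k. fps_const (fps_const (c t)) * EE xi (monA t))"
    unfolding fc EE_comb ..
  have ent: "real i + s * real j = v0 \<Longrightarrow> EE xi f $ j $ i = (\<Sum>t\<in>S0. c t * (if j = snd t \<and> i = fst t then 1 else 0))" for i j
  proof -
    assume v: "real i + s * real j = v0"
    have "EE xi f $ j $ i = (\<Sum>t\<in>S0. c t * LL s v0 (EE xi (monA t)) $ j $ i)"
      using C(2)[OF EEf v] unfolding S0_def .
    also have "\<dots> = (\<Sum>t\<in>S0. c t * (if j = snd t \<and> i = fst t then 1 else 0))"
      by (rule sum.cong[OF refl]) (simp only: LLG X_entry)
    finally show ?thesis .
  qed
  have v0eq: "real a0 + s * real b0 = v0" using t0 by (simp add: S0_def \<phi>_def)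
  have "EE xi f $ b0 $ a0 = (\<Sum>t\<in>S0. c t * (if b0 = snd t \<and> a0 = fst t then 1 else 0))"
    using ent[OF v0eq] .
  also have "\<dots> = (\<Sum>t\<in>S0. if t = (a0, b0) then c t else 0)"
  proof (rule sum.cong[OF refl])
    fix t :: "nat \<times> nat"
    show "c t * (if b0 = snd t \<and> a0 = fst t then 1 else 0) = (if t = (a0, b0) then c t else 0)"
      by (cases t) auto
  qed
  also have "\<dots> = c (a0, b0)" using t0 finS0 by (simp add: sum.delta')
  finally have nz: "EE xi f $ b0 $ a0 \<noteq> 0" using t0 by (simp add: S0_def)
  have low: "EE xi f $ j $ i = 0" if "j < b0" "real i + s * real j = v0" for i j
  proof -
    have "EE xi f $ j $ i = (\<Sum>t\<in>S0. c t * (if j = snd t \<and> i = fst t then 1 else 0))" using ent that by simp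
    also have "\<dots> = 0" using b0min that(1) by (intro sum.neutral) fastforce
    finally show ?thesis .
  qed
  have "vplus xi s f = (v0, real b0)"
    by (rule vplus_char(2)[OF C(1)[OF EEf] v0eq nz low])
  moreover have "a0 + b0 \<le> k" using t0 by (simp add: S0_def TA_def)
  ultimately show ?thesis using v0eq by auto
qed


definition monB :: "nat \<times> nat \<times> nat \<Rightarrow> bipoly \<Rightarrow> bipoly" where
  "monB t Q = (case t of (m, b, e) \<Rightarrow> Xp ^ e * Yp ^ b * Q ^ m)"
definition TB :: "nat \<Rightarrow> (nat \<times> nat \<times> nat) set" where
  "TB k = {(m, b, e). e \<le> 1 \<and> 2 * m + b + e \<le> k}"

lemma finite_TB: "finite (TB k)"
  unfolding TB_def by (rule finite_subset[of _ "{..k} \<times> {..k} \<times> {..k}"]) auto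

locale conicB =
  fixes Q :: bipoly and xi :: "complex fps" and a01 a11 a02 a20 :: complex
  assumes Qform: "Q = [:[:0,0,a20:], [:a01,a11:], [:a02:]:]"
    and a20: "a20 \<noteq> 0" and a01: "a01 \<noteq> 0"
    and xi0: "xi $ 0 = 0" and xi1: "xi $ 1 = 0" and xi2: "xi $ 2 \<noteq> 0"
    and col0: "EE xi Q $ 0 = 0" and e01: "EE xi Q $ 1 $ 0 = a01"
begin

lemma red: "Cst a20 * Xp ^ 2 = Q - Cst a01 * Yp - Cst a11 * Xp * Yp - Cst a02 * Yp ^ 2"
  unfolding Qform by (simp add: Cst_def Xp_def Yp_def power2_eq_square)

lemma red2: "Xp ^ 2 = Cst (1 / a20) * (Q - Cst a01 * Yp - Cst a11 * Xp * Yp - Cst a02 * Yp ^ 2)"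
proof -
  have "Cst (1 / a20) * (Cst a20 * Xp ^ 2) = Xp ^ 2"
    using a20 by (simp add: mult.assoc[symmetric] Cst_mult[symmetric])
  then show ?thesis using red by simp
qed

lemma inSp_diff: "inSp g T f1 \<Longrightarrow> inSp g T f2 \<Longrightarrow> inSp g T (f1 - f2)"
proof -
  have c: "Cst (-1) = - Cst 1" by (simp add: Cst_def)
  assume "inSp g T f1" "inSp g T f2"
  then have "inSp g T (f1 + Cst (-1) * f2)" by (intro inSp_add inSp_scale)
  then show ?thesis unfolding c by simp
qed

lemma Xmon:
  assumes t: "t \<in> TB k"
  shows "inSp (\<lambda>t. monB t Q) (TB (Suc k)) (Xp * monB t Q)"
proof -
  obtain m b e where tt: "t = (m, b, e)" by (cases t)
  have g: "\<And>t'. t' \<in> TB (Suc k) \<Longrightarrow> inSp (\<lambda>t. monB t Q) (TB (Suc k)) (monB t' Q)"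
    by (rule inSp_gen[OF finite_TB])
  show ?thesis
  proof (cases "e = 0")
    case True
    have "Xp * monB t Q = monB (m, b, 1) Q" unfolding tt True by (simp add: monB_def)
    moreover have "(m, b, 1) \<in> TB (Suc k)" using t unfolding tt True TB_def by auto
    ultimately show ?thesis using g by simp
  next
    case False
    then have e: "e = 1" using t unfolding tt TB_def by auto
    have "Xp * monB t Q = Xp ^ 2 * Yp ^ b * Q ^ m" unfolding tt e
      by (simp add: monB_def power2_eq_square algebra_simps)
    also have "\<dots> = Cst (1 / a20) * (monB (Suc m, b, 0) Q - Cst a01 * monB (m, Suc b, 0) Q
          - Cst a11 * monB (m, Suc b, 1) Q - Cst a02 * monB (m, b + 2, 0) Q)"
      unfolding red2 by (simp add: monB_def algebra_simps power2_eq_square)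
    also have "inSp (\<lambda>t. monB t Q) (TB (Suc k)) \<dots>"
      using t unfolding tt e
      by (intro inSp_scale inSp_diff g) (auto simp: TB_def)
    finally show ?thesis .
  qed
qed

lemma inB_all: assumes "tdeg f \<le> k" shows "inSp (\<lambda>t. monB t Q) (TB k) f"
proof (rule tdeg_induct[where P = "\<lambda>k f. inSp (\<lambda>t. monB t Q) (TB k) f", OF _ _ _ _ assms])
  fix k f g assume "inSp (\<lambda>t. monB t Q) (TB k) f" "inSp (\<lambda>t. monB t Q) (TB k) g"
  then show "inSp (\<lambda>t. monB t Q) (TB k) (f + g)" by (rule inSp_add)
next
  fix k c
  have "inSp (\<lambda>t. monB t Q) (TB k) (monB (0,0,0) Q)" by (rule inSp_gen[OF finite_TB]) (auto simp: TB_def)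
  then show "inSp (\<lambda>t. monB t Q) (TB k) (Cst c)"
    using inSp_scale[of "\<lambda>t. monB t Q" "TB k" "monB (0,0,0) Q" c] by (simp add: monB_def)
next
  fix k f assume "inSp (\<lambda>t. monB t Q) (TB k) f"
  then obtain c where f: "f = (\<Sum>t\<in>TB k. Cst (c t) * monB t Q)" unfolding inSp_def by blast
  have "Xp * f = (\<Sum>t\<in>TB k. Cst (c t) * (Xp * monB t Q))"
    unfolding f by (simp add: sum_distrib_left algebra_simps)
  also have "inSp (\<lambda>t. monB t Q) (TB (Suc k)) \<dots>"
    by (intro inSp_sum finite_TB inSp_scale Xmon)
  finally show "inSp (\<lambda>t. monB t Q) (TB (Suc k)) (Xp * f)" .
next
  fix k f assume "inSp (\<lambda>t. monB t Q) (TB k) f"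
  then obtain c where f: "f = (\<Sum>t\<in>TB k. Cst (c t) * monB t Q)" unfolding inSp_def by blast
  have "Yp * f = (\<Sum>t\<in>TB k. Cst (c t) * monB (fst t, Suc (fst (snd t)), snd (snd t)) Q)"
    unfolding f by (intro trans[OF sum_distrib_left] sum.cong refl) (auto simp: monB_def algebra_simps split: prod.splits)
  also have "inSp (\<lambda>t. monB t Q) (TB (Suc k)) \<dots>"
    by (intro inSp_sum finite_TB inSp_scale inSp_gen) (auto simp: TB_def)
  finally show "inSp (\<lambda>t. monB t Q) (TB (Suc k)) (Yp * f)" .
qed

end


context conicB begin

definition HY :: "real \<Rightarrow> complex fps fps" where
  "HY s = fps_const (fps_const (xi $ 2) * fps_X ^ 2) + (if s = 2 then fps_X else 0)"

lemma ge_Y_big: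
  assumes s: "s \<ge> 2"
  shows "ge s (Yv xi) 2" "LL s 2 (Yv xi) = HY s"
proof -
  have x: "i < 2 \<Longrightarrow> xi $ i = 0" for i using xi0 xi1 by (cases i) (auto simp: less_2_cases_iff)
  show "ge s (Yv xi) 2"
    unfolding ge_def
  proof (intro allI impI)
    fix i j assume lt: "real i + s * real j < 2"
    have "j = 0"
    proof (rule ccontr)
      assume "j \<noteq> 0" then have "real j \<ge> 1" by simp
      then have "s * real j \<ge> 2" using s by (metis mult.right_neutral mult_mono order.trans zero_le_one
          of_nat_0_le_iff order_trans[OF _ s] less_imp_le  linorder_not_le dual_order.trans zero_le_numeral)
      then show False using lt by simp
    qed
    moreover have "i < 2" using lt \<open>j = 0\<close> by simp
    ultimately show "Yv xi $ j $ i = 0" using x by (simp add: Yv_nth)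
  qed
  show "LL s 2 (Yv xi) = HY s"
  proof (intro fps_ext)
    fix j i
    show "LL s 2 (Yv xi) $ j $ i = HY s $ j $ i"
    proof (cases "j = 0")
      case True then show ?thesis by (auto simp: LL_nth Yv_nth HY_def fps_X_power_mult_right_nth)
    next
      case False
      show ?thesis
      proof (cases "j = 1")
        case True then show ?thesis using s by (auto simp: LL_nth Yv_nth HY_def)
      next
        case False
        then show ?thesis using \<open>j \<noteq> 0\<close> by (auto simp: LL_nth Yv_nth HY_def)
      qed
    qed
  qed
qed

lemma ge_Q:
  assumes s: "s > 0"
  shows "ge s (EE xi Q) s" "LL s s (EE xi Q) = fps_const (fps_const a01) * fps_X"
proof -
  show "ge s (EE xi Q) s"
    unfolding ge_def
  proof (intro allI impI)
    fix i j assume lt: "real i + s * real j < s"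
    have "j = 0"
    proof (rule ccontr)
      assume "j \<noteq> 0" then have "real j \<ge> 1" by simp
      then have "s * real j \<ge> s" using s by simp
      then show False using lt by simp
    qed
    then show "EE xi Q $ j $ i = 0" using col0 by simp
  qed
  show "LL s s (EE xi Q) = fps_const (fps_const a01) * fps_X"
  proof (intro fps_ext)
    fix j i
    show "LL s s (EE xi Q) $ j $ i = (fps_const (fps_const a01) * fps_X) $ j $ i"
    proof (cases "j = 0")
      case True then show ?thesis by (auto simp: LL_nth col0)
    next
      case False
      show ?thesis
      proof (cases "j = 1")
        case True then show ?thesis using s e01 by (auto simp: LL_nth)
      next
        case False
        then have "real j \<ge> 2" using \<open>j \<noteq> 0\<close> by simp
        then have "s * real j \<ge> s * 2" using s by simp
        then have "real i + s * real j \<noteq> s" using s by (smt (verit) of_nat_0_le_iff)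
        then show ?thesis using False by (auto simp: LL_nth)
      qed
    qed
  qed
qed

definition HB :: "real \<Rightarrow> nat \<times> nat \<times> nat \<Rightarrow> complex fps fps" where
  "HB s t = (case t of (m, b, e) \<Rightarrow>
     fps_const fps_X ^ e * HY s ^ b * (fps_const (fps_const a01) * fps_X) ^ m)"

lemma HB_nth:
  "HB s (m, b, e) $ j $ i = (if j < m then 0 else if j = m then
      (if i = e + 2 * b then a01 ^ m * (xi $ 2) ^ b else 0) else HB s (m, b, e) $ j $ i)"
proof -
  define P where "P = fps_const fps_X ^ e * HY s ^ b * fps_const (fps_const a01) ^ m"
  have HBP: "HB s (m, b, e) = P * fps_X ^ m"
    unfolding HB_def P_def by (simp add: power_mult_distrib algebra_simps)
  have P0': "P $ 0 = fps_const (a01 ^ m * (xi $ 2) ^ b) * (fps_X ^ e * (fps_X ^ 2) ^ b)"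
    unfolding P_def by (simp add: fps_nth_power_0 HY_def power_mult_distrib algebra_simps)
  have P0: "P $ 0 = fps_const (a01 ^ m * (xi $ 2) ^ b) * fps_X ^ (e + 2 * b)"
    unfolding P0' by (simp add: power_add power_mult)
  show ?thesis
    by (auto simp: HBP fps_X_power_mult_right_nth P0)
qed

lemma monB_lead:
  assumes s: "s \<ge> 2"
  shows "ge s (EE xi (monB (m, b, e) Q)) (real e + 2 * real b + s * real m)"
    "LL s (real e + 2 * real b + s * real m) (EE xi (monB (m, b, e) Q)) = HB s (m, b, e)"
proof -
  have s0: "s \<ge> 0" "s > 0" using s by auto
  have EEm: "EE xi (monB (m, b, e) Q) = fps_const fps_X ^ e * Yv xi ^ b * EE xi Q ^ m"
    by (simp add: monB_def EE_mult EE_power EE_Xp EE_Yp)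
  note X = ge_power[OF s0(1) ge_X, of e] and Y = ge_power[OF s0(1) ge_Y_big(1)[OF s], of b]
    and QQ = ge_power[OF s0(1) ge_Q(1)[OF s0(2)], of m]
  have e: "real e + 2 * real b + s * real m = (real e * 1 + real b * 2) + real m * s" by simp
  note XY = ge_mult[OF X[THEN conjunct1] Y[THEN conjunct1]]
  show "ge s (EE xi (monB (m, b, e) Q)) (real e + 2 * real b + s * real m)"
    unfolding EEm e using ge_mult[OF XY QQ[THEN conjunct1]] by simp
  show "LL s (real e + 2 * real b + s * real m) (EE xi (monB (m, b, e) Q)) = HB s (m, b, e)"
    unfolding EEm e LL_mult[OF XY QQ[THEN conjunct1]] LL_mult[OF X[THEN conjunct1] Y[THEN conjunct1]]
    using X Y QQ LL_X ge_Y_big(2)[OF s] ge_Q(2)[OF s0(2)] by (simp add: HB_def)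
qed

lemma monB_vplus:
  assumes s: "s \<ge> 2"
  shows "vplus xi s (monB (m, b, e) Q) = (real e + 2 * real b + s * real m, real m)"
proof (rule vplus_char(2)[OF monB_lead(1)[OF s]])
  note L = monB_lead(2)[OF s, where m=m and b=b and e=e]
  have en: "real i + s * real j = real e + 2 * real b + s * real m \<Longrightarrow>
      EE xi (monB (m, b, e) Q) $ j $ i = HB s (m, b, e) $ j $ i" for i j
    using arg_cong[OF L, of "\<lambda>F. F $ j $ i"] by (simp add: LL_nth)
  show "EE xi (monB (m, b, e) Q) $ m $ (e + 2 * b) \<noteq> 0"
    using en[of "e + 2 * b" m] HB_nth[of s m b e m "e + 2 * b"] a01 xi2 by simp
  show "\<And>i j. j < m \<Longrightarrow> real i + s * real j = real e + 2 * real b + s * real m \<Longrightarrow>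
      EE xi (monB (m, b, e) Q) $ j $ i = 0"
  proof -
    fix i j assume "j < m" "real i + s * real j = real e + 2 * real b + s * real m"
    then show "EE xi (monB (m, b, e) Q) $ j $ i = 0"
      using en HB_nth[of s m b e j i] by simp
  qed
qed simp

end


context conicB begin

theorem thmB:
  assumes s: "s \<ge> 2" and f: "f \<noteq> 0" "tdeg f \<le> k"
  shows "\<exists>m b e. e \<le> 1 \<and> 2 * m + b + e \<le> k \<and>
           vplus xi s f = (real e + 2 * real b + s * real m, real m)"
proof -
  obtain c where fc: "f = (\<Sum>t\<in>TB k. Cst (c t) * monB t Q)"
    using inB_all[OF f(2)] unfolding inSp_def by blast
  define \<phi> where "\<phi> t = (case t of (m, b, e) \<Rightarrow> real e + 2 * real b + s * real m)" for t :: "nat \<times> nat \<times> nat"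
  define N where "N = {t\<in>TB k. c t \<noteq> 0}"
  have Nne: "N \<noteq> {}" using inSp_nonzero[OF fc f(1)] unfolding N_def .
  have finN: "finite N" unfolding N_def using finite_TB by simp
  define v0 where "v0 = Min (\<phi> ` N)"
  define S0 where "S0 = {t\<in>TB k. c t \<noteq> 0 \<and> \<phi> t = v0}"
  have S0N: "S0 = {t \<in> N. \<phi> t = v0}" unfolding S0_def N_def by auto
  have "v0 \<in> \<phi> ` N" unfolding v0_def using finN Nne by (intro Min_in) auto
  then have S0ne: "S0 \<noteq> {}" unfolding S0N by auto
  have finS0: "finite S0" unfolding S0N using finN by simp
  define m0 where "m0 = Min (fst ` S0)"
  have "m0 \<in> fst ` S0" unfolding m0_def using finS0 S0ne by (intro Min_in) auto
  then obtain b0 e0 where t0: "(m0, b0, e0) \<in> S0" by auto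
  have m0min: "t \<in> S0 \<Longrightarrow> m0 \<le> fst t" for t unfolding m0_def using finS0 by (intro Min_le) auto
  have geG: "ge s (EE xi (monB t Q)) (\<phi> t)" for t
    using monB_lead(1)[OF s] by (cases t) (simp add: \<phi>_def)
  have LLG: "t \<in> S0 \<Longrightarrow> LL s v0 (EE xi (monB t Q)) = HB s t" for t
    using monB_lead(2)[OF s] by (cases t) (auto simp: \<phi>_def S0_def)
  note C = comb[OF finite_TB, where s=s and G="\<lambda>t. EE xi (monB t Q)" and \<phi>=\<phi> and F="EE xi f" and c=c,
      OF geG _ v0_def[unfolded N_def] Nne[unfolded N_def]]
  have EEf: "EE xi f = (\<Sum>t\<in>TB k. fps_const (fps_const (c t)) * EE xi (monB t Q))"
    unfolding fc EE_comb ..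
  have ent: "EE xi f $ j $ i = (\<Sum>t\<in>S0. c t * HB s t $ j $ i)" if v: "real i + s * real j = v0" for i j
  proof -
    have "EE xi f $ j $ i = (\<Sum>t\<in>S0. c t * LL s v0 (EE xi (monB t Q)) $ j $ i)"
      using C(2)[OF EEf v] unfolding S0_def .
    also have "\<dots> = (\<Sum>t\<in>S0. c t * HB s t $ j $ i)"
      by (rule sum.cong[OF refl]) (simp only: LLG)
    finally show ?thesis .
  qed
  define i0 where "i0 = e0 + 2 * b0"
  have v0eq: "real i0 + s * real m0 = v0" using t0 by (simp add: S0_def \<phi>_def i0_def)
  have e0le: "e0 \<le> 1" using t0 by (simp add: S0_def TB_def)
  have "EE xi f $ m0 $ i0 = (\<Sum>t\<in>S0. if t = (m0, b0, e0) then c t * (a01 ^ m0 * (xi $ 2) ^ b0) else 0)"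
    unfolding ent[OF v0eq]
  proof (rule sum.cong[OF refl])
    fix t assume tS: "t \<in> S0"
    obtain m b e where tt: "t = (m, b, e)" by (cases t)
    have ge: "m0 \<le> m" using m0min[OF tS] tt by simp
    have ele: "e \<le> 1" using tS tt by (simp add: S0_def TB_def)
    show "c t * HB s t $ m0 $ i0 = (if t = (m0, b0, e0) then c t * (a01 ^ m0 * (xi $ 2) ^ b0) else 0)"
    proof (cases "m = m0")
      case False
      then have "m0 < m" using ge by simp
      then show ?thesis using HB_nth[of s m b e m0 i0] tt by auto
    next
      case True
      have "\<phi> t = v0" using tS by (simp add: S0_def)
      then have "real e + 2 * real b = real e0 + 2 * real b0"
        using v0eq True tt by (simp add: \<phi>_def i0_def)
      then have "e + 2 * b = e0 + 2 * b0" by linarith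
      then have "i0 = e + 2 * b \<longleftrightarrow> (b = b0 \<and> e = e0)" using ele e0le unfolding i0_def by presburger
      then show ?thesis using HB_nth[of s m b e m0 i0] tt True
        by (auto simp: i0_def)
    qed
  qed
  also have "\<dots> = c (m0, b0, e0) * (a01 ^ m0 * (xi $ 2) ^ b0)"
    using t0 finS0 by (simp add: sum.delta')
  finally have nz: "EE xi f $ m0 $ i0 \<noteq> 0" using t0 a01 xi2 by (simp add: S0_def)
  have low: "EE xi f $ j $ i = 0" if "j < m0" "real i + s * real j = v0" for i j
  proof -
    have "EE xi f $ j $ i = (\<Sum>t\<in>S0. c t * HB s t $ j $ i)" using ent that by simp
    also have "\<dots> = 0"
    proof (intro sum.neutral ballI)
      fix t assume tS: "t \<in> S0"
      obtain m b e where tt: "t = (m, b, e)" by (cases t)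
      have "j < m" using m0min[OF tS] tt that(1) by simp
      then show "c t * HB s t $ j $ i = 0" using HB_nth[of s m b e j i] tt by simp
    qed
    finally show ?thesis .
  qed
  have "vplus xi s f = (v0, real m0)"
    by (rule vplus_char(2)[OF C(1)[OF EEf] v0eq nz low])
  moreover have "2 * m0 + b0 + e0 \<le> k" using t0 by (simp add: S0_def TB_def)
  ultimately show ?thesis using v0eq e0le unfolding i0_def by (intro exI[of _ m0] exI[of _ b0] exI[of _ e0]) auto
qed

end


lemma poly3: "degree p \<le> 2 \<Longrightarrow> p = [:coeff p 0, coeff p 1, coeff p 2:]"
proof (rule poly_eqI)
  fix n assume d: "degree p \<le> 2"
  show "coeff p n = coeff [:coeff p 0, coeff p 1, coeff p 2:] n"
  proof (cases "n \<le> 2")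
    case True
    then have "n = 0 \<or> n = 1 \<or> n = 2" by auto
    then show ?thesis by (auto simp: coeff_pCons)
  next
    case False
    then have "coeff p n = 0" using d by (intro coeff_eq_0) simp
    moreover have "n = Suc (Suc (Suc (n - 3)))" using False by simp
    ultimately show ?thesis by (metis coeff_pCons_Suc coeff_pCons_0 coeff_0 pCons_0_0)
  qed
qed

lemma poly2: "degree p \<le> 1 \<Longrightarrow> p = [:coeff p 0, coeff p 1:]"
proof (rule poly_eqI)
  fix n assume d: "degree p \<le> 1"
  show "coeff p n = coeff [:coeff p 0, coeff p 1:] n"
  proof (cases "n \<le> 1")
    case True
    then have "n = 0 \<or> n = 1" by auto
    then show ?thesis by (auto simp: coeff_pCons)
  next
    case False
    then have "coeff p n = 0" using d by (intro coeff_eq_0) simp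
    moreover have "n = Suc (Suc (n - 2))" using False by simp
    ultimately show ?thesis by (metis coeff_pCons_Suc coeff_pCons_0 coeff_0 pCons_0_0)
  qed
qed

lemma poly1: "degree p = 0 \<Longrightarrow> p = [:coeff p 0:]"
  by (metis degree_0_id)

lemma conic_setup:
  fixes Q :: bipoly and xi :: "complex fps"
  assumes conic: "tdeg Q = 2" and irred: "irreducible Q"
    and through_O: "val_O Q = 0"
    and smooth_O: "(dx_O Q, dy_O Q) \<noteq> (0, 0)"
    and tangent: "dx_O Q = 0"
    and xi0: "fps_nth xi 0 = 0" and xi1: "fps_nth xi 1 = 0"
    and branch: "subst_branch xi Q = 0"
  shows "conicB Q xi (dy_O Q) (poly.coeff (coeff Q 1) 1) (poly.coeff (coeff Q 2) 0) (poly.coeff (coeff Q 0) 2)"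
proof -
  define a01 where "a01 = dy_O Q"
  define a11 where "a11 = poly.coeff (coeff Q 1) 1"
  define a02 where "a02 = poly.coeff (coeff Q 2) 0"
  define a20 where "a20 = poly.coeff (coeff Q 0) 2"
  have td: "coeff Q q \<noteq> 0 \<Longrightarrow> degree (coeff Q q) + q \<le> 2" for q
    using tdeg_ge[of Q q] conic by simp
  have dQ: "degree Q \<le> 2"
    by (rule degree_le) (use td in force)
  have d0: "degree (coeff Q 0) \<le> 2" using td[of 0] by (cases "coeff Q 0 = 0") auto
  have d1: "degree (coeff Q 1) \<le> 1" using td[of 1] by (cases "coeff Q 1 = 0") auto
  have d2: "degree (coeff Q 2) = 0" using td[of 2] by (cases "coeff Q 2 = 0") auto
  have c0: "coeff Q 0 = [:0, 0, a20:]"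
    using poly3[OF d0] through_O tangent by (simp add: val_O_def dx_O_def a20_def)
  have c1: "coeff Q 1 = [:a01, a11:]"
    using poly2[OF d1] by (simp add: dy_O_def a01_def a11_def)
  have c2: "coeff Q 2 = [:a02:]"
    using poly1[OF d2] by (simp add: a02_def)
  have Qform: "Q = [:[:0,0,a20:], [:a01,a11:], [:a02:]:]"
    using poly3[OF dQ] c0 c1 c2 by simp
  have a01: "a01 \<noteq> 0" using smooth_O tangent by (simp add: a01_def)
  have a20: "a20 \<noteq> 0"
  proof
    assume z: "a20 = 0"
    define R where "R = [:[:a01,a11:], [:a02:]:]"
    have "Q = Yp * R" unfolding Qform z R_def by (simp add: Yp_def)
    then have u: "is_unit Yp \<or> is_unit R" using irreducibleD[OF irred] by blast
    have "\<not> is_unit Yp"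
    proof
      assume "is_unit Yp"
      then obtain c where "Yp = [:c:]" using is_unit_poly_iff by blast
      then show False unfolding Yp_def by simp
    qed
    with u have "is_unit R" by simp
    then obtain c where Rc: "R = [:c:]" and cu: "is_unit c" using is_unit_poly_iff by blast
    then have "a02 = 0" "c = [:a01, a11:]" unfolding R_def by simp_all
    with cu obtain d where "[:a01, a11:] = [:d:]" using is_unit_poly_iff by blast
    then have "a11 = 0" by simp
    then have "Q = [:0, [:a01:]:]" using Qform z \<open>a02 = 0\<close> by simp
    then have "tdeg Q \<le> 1" unfolding tdeg_le_iff by (auto simp: coeff_pCons split: nat.splits)
    then show False using conic by simp
  qed
  have col0: "EE xi Q $ 0 = 0" using branch by (simp add: subst_branch_EE)
  have EQ: "EE xi Q = emb [:0,0,a20:] + Yv xi * (emb [:a01,a11:] + Yv xi * emb [:a02:])"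
    unfolding Qform by (simp add: EE_pCons)
  have m1: "(A * B) $ 1 = A $ 0 * B $ 1 + A $ 1 * B $ 0" for A B :: "complex fps fps"
    by (simp add: fps_mult_nth)
  have m2: "(A * B) $ 2 = A $ 0 * B $ 2 + A $ 1 * B $ 1 + A $ 2 * B $ 0" for A B :: "complex fps"
    by (simp add: fps_mult_nth numeral_2_eq_2)
  have Y0: "Yv xi $ 0 = xi" and Y1: "Yv xi $ 1 = 1" by (simp_all add: Yv_nth)
  have emb0: "emb p $ 0 = fps_of_poly p" and emb1: "emb p $ 1 = 0" for p by (simp_all add: emb_def)
  have col1: "EE xi Q $ 1 = xi * fps_of_poly [:a02:] + (fps_of_poly [:a01,a11:] + xi * fps_of_poly [:a02:])"
    unfolding EQ fps_add_nth m1 fps_mult_nth_0 Y0 Y1 emb0 emb1 by simp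
  have e01: "EE xi Q $ 1 $ 0 = a01"
    unfolding col1 using xi0 by simp
  have col0': "EE xi Q $ 0 = fps_of_poly [:0,0,a20:] + xi * (fps_of_poly [:a01,a11:] + xi * fps_of_poly [:a02:])"
    unfolding EQ fps_add_nth fps_mult_nth_0 Y0 emb0 by simp
  have "EE xi Q $ 0 $ 2 = a20 + xi $ 2 * a01"
    unfolding col0' fps_add_nth m2 using xi0 xi1 by (simp add: numeral_2_eq_2)
  then have xi2: "xi $ 2 \<noteq> 0" using col0 a20 by auto
  show ?thesis
    unfolding a01_def[symmetric] a11_def[symmetric] a02_def[symmetric] a20_def[symmetric]
    by (unfold_locales) (fact Qform a20 a01 xi0 xi1 xi2 col0 e01)+
qed


lemma tri_param:
  "p \<in> triangle a b c \<longleftrightarrow> (\<exists>u w. u \<ge> 0 \<and> w \<ge> 0 \<and> u + w \<le> 1 \<and> p = (u * a + w * b, w * c))"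
proof -
  have "p \<in> triangle a b c \<longleftrightarrow> (\<exists>v u w. 0 \<le> v \<and> 0 \<le> u \<and> 0 \<le> w \<and> v + u + w = 1 \<and>
           p = v *\<^sub>R (0,0) + u *\<^sub>R (a,0) + w *\<^sub>R (b,c))"
    unfolding triangle_def convex_hull_3 by blast
  also have "\<dots> \<longleftrightarrow> (\<exists>u w. u \<ge> 0 \<and> w \<ge> 0 \<and> u + w \<le> 1 \<and> p = (u * a + w * b, w * c))"
  proof
    assume "\<exists>v u w. 0 \<le> v \<and> 0 \<le> u \<and> 0 \<le> w \<and> v + u + w = 1 \<and> p = v *\<^sub>R (0,0) + u *\<^sub>R (a,0) + w *\<^sub>R (b,c)"
    then obtain v u w where "0 \<le> v" "0 \<le> u" "0 \<le> w" "v + u + w = 1" "p = v *\<^sub>R (0,0) + u *\<^sub>R (a,0) + w *\<^sub>R (b,c)"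
      by blast
    then show "\<exists>u w. u \<ge> 0 \<and> w \<ge> 0 \<and> u + w \<le> 1 \<and> p = (u * a + w * b, w * c)"
      by (intro exI[of _ u] exI[of _ w]) auto
  next
    assume "\<exists>u w. u \<ge> 0 \<and> w \<ge> 0 \<and> u + w \<le> 1 \<and> p = (u * a + w * b, w * c)"
    then obtain u w where "u \<ge> 0" "w \<ge> 0" "u + w \<le> 1" "p = (u * a + w * b, w * c)" by blast
    then show "\<exists>v u w. 0 \<le> v \<and> 0 \<le> u \<and> 0 \<le> w \<and> v + u + w = 1 \<and> p = v *\<^sub>R (0,0) + u *\<^sub>R (a,0) + w *\<^sub>R (b,c)"
      by (intro exI[of _ "1 - u - w"] exI[of _ u] exI[of _ w]) auto
  qed
  finally show ?thesis .
qed

lemma tri_closed: "closed (triangle a b c)"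
  unfolding triangle_def by (intro compact_imp_closed finite_imp_compact_convex_hull) simp

lemma tri_convex: "convex (triangle a b c)"
  unfolding triangle_def by simp

lemma tri_verts: "(0,0) \<in> triangle a b c" "(a,0) \<in> triangle a b c" "(b,c) \<in> triangle a b c"
  unfolding triangle_def by (auto intro: hull_inc)

lemma Delta_from:
  assumes "S \<subseteq> triangle a b c" "{(0,0), (a,0), (b,c)} \<subseteq> S"
  shows "closure (convex hull S) = triangle a b c"
proof
  have "convex hull S \<subseteq> triangle a b c" using assms(1) tri_convex by (intro hull_minimal) auto
  then show "closure (convex hull S) \<subseteq> triangle a b c"
    using tri_closed by (intro closure_minimal)
  have "triangle a b c \<subseteq> convex hull S" unfolding triangle_def using assms(2) by (rule hull_mono)
  then show "triangle a b c \<subseteq> closure (convex hull S)" using closure_subset by blast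
qed

lemma tri_frontier:
  assumes a: "a > 0" and b: "b \<ge> 0" and c: "c > 0"
  shows "(0,0) \<in> frontier (triangle a b c)" "(a,0) \<in> frontier (triangle a b c)"
    "(b,c) \<in> frontier (triangle a b c)"
proof -
  have fr: "v \<in> frontier (triangle a b c)" if v: "v \<in> triangle a b c"
    and out: "\<And>e. e > 0 \<Longrightarrow> \<exists>x. x \<notin> triangle a b c \<and> dist v x < e" for v
    unfolding frontier_straddle using v out by force
  show "(0,0) \<in> frontier (triangle a b c)"
  proof (rule fr[OF tri_verts(1)])
    fix e :: real assume e: "e > 0"
    have "(- e/2, 0) \<notin> triangle a b c"
    proof
      assume "(- e/2, 0) \<in> triangle a b c"
      then obtain u w where uw: "u \<ge> 0" "w \<ge> 0" "(- e/2, 0) = (u * a + w * b, w * c)"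
        unfolding tri_param by blast
      then have "- e/2 = u * a + w * b" by simp
      moreover have "u * a \<ge> 0" "w * b \<ge> 0" using uw a b by simp_all
      ultimately show False using e by linarith
    qed
    moreover have "dist (0,0) (- e/2, 0::real) < e" using e by (simp add: dist_Pair_Pair)
    ultimately show "\<exists>x. x \<notin> triangle a b c \<and> dist (0,0) x < e" by blast
  qed
  show "(a,0) \<in> frontier (triangle a b c)"
  proof (rule fr[OF tri_verts(2)])
    fix e :: real assume e: "e > 0"
    have "(a + e/2, 0) \<notin> triangle a b c"
    proof
      assume "(a + e/2, 0) \<in> triangle a b c"
      then obtain u w where uw: "u \<ge> 0" "w \<ge> 0" "u + w \<le> 1" "(a + e/2, 0) = (u * a + w * b, w * c)"
        unfolding tri_param by blast
      then have "w * c = 0" by simp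
      then have "w = 0" using c by simp
      then have "a + e/2 = u * a" using uw by simp
      moreover have "u * a \<le> a" using uw a \<open>w = 0\<close> by (simp add: mult_left_le_one_le)
      ultimately show False using e by linarith
    qed
    moreover have "dist (a,0) (a + e/2, 0::real) < e" using e by (simp add: dist_Pair_Pair dist_real_def)
    ultimately show "\<exists>x. x \<notin> triangle a b c \<and> dist (a,0) x < e" by blast
  qed
  show "(b,c) \<in> frontier (triangle a b c)"
  proof (rule fr[OF tri_verts(3)])
    fix e :: real assume e: "e > 0"
    have "(b, c + e/2) \<notin> triangle a b c"
    proof
      assume "(b, c + e/2) \<in> triangle a b c"
      then obtain u w where uw: "u \<ge> 0" "w \<ge> 0" "u + w \<le> 1" "(b, c + e/2) = (u * a + w * b, w * c)"
        unfolding tri_param by blast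
      then have "c + e/2 = w * c" by simp
      moreover have "w * c \<le> c" using uw c by (simp add: mult_left_le_one_le)
      ultimately show False using e by linarith
    qed
    moreover have "dist (b,c) (b, c + e/2) < e" using e by (simp add: dist_Pair_Pair dist_real_def)
    ultimately show "\<exists>x. x \<notin> triangle a b c \<and> dist (b,c) x < e" by blast
  qed
qed

lemma tri_extreme: "v extreme_point_of triangle a b c \<Longrightarrow> v \<in> {(0,0), (a,0), (b,c)}"
  unfolding triangle_def by (rule extreme_point_of_convex_hull)

lemma tri_top_extreme:
  assumes c: "c \<noteq> 0"
  shows "(b, c) extreme_point_of triangle a b c"
proof -
  have cv: "convex {p :: real \<times> real. snd p = 0}" unfolding convex_def by auto
  have "convex hull {(0,0), (a,0)} \<subseteq> {p :: real \<times> real. snd p = 0}"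
    by (rule hull_minimal) (use cv in auto)
  then have "(b, c) \<notin> convex hull {(0,0), (a,0)}" using c by auto
  then have "(b, c) extreme_point_of convex hull (insert (b,c) {(0,0), (a,0)})"
    by (intro extreme_point_of_convex_hull_insert) auto
  moreover have "insert (b,c) {(0,0), (a,0)} = {(0,0), (a,0), (b,c)}" by auto
  ultimately show ?thesis unfolding triangle_def by simp
qed

lemma tri_snd_le: "p \<in> triangle a b c \<Longrightarrow> c \<ge> 0 \<Longrightarrow> snd p \<le> c"
  unfolding tri_param by (auto simp: mult_left_le_one_le)

lemma tri_fst_le: "p \<in> triangle a b c \<Longrightarrow> a \<ge> 0 \<Longrightarrow> b \<ge> 0 \<Longrightarrow> fst p \<le> max a b"
  unfolding tri_param
proof (elim exE conjE)
  fix u w assume uw: "0 \<le> u" "0 \<le> w" "u + w \<le> 1" "p = (u * a + w * b, w * c)"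
  assume ab: "a \<ge> 0" "b \<ge> 0"
  have "u * a \<le> u * max a b" "w * b \<le> w * max a b" using uw by (auto intro: mult_left_mono)
  moreover have "(u + w) * max a b \<le> max a b" using uw ab by (simp add: mult_left_le_one_le)
  ultimately show "fst p \<le> max a b" using uw by (simp add: algebra_simps)
qed


lemma monA_ne: "monA (a, b) \<noteq> 0" by (simp add: monA_def Xp_def Yp_def)
lemma monA_tdeg: "tdeg (monA (a, b)) \<le> a + b"
proof -
  have "tdeg (monA (a, b)) \<le> tdeg (Xp ^ a) + tdeg (Yp ^ b)" unfolding monA_def by (simp add: tdeg_mult)
  also have "\<dots> \<le> a * tdeg Xp + b * tdeg Yp" by (intro add_mono tdeg_power)
  also have "\<dots> \<le> a * 1 + b * 1" by (intro add_mono mult_left_mono tdeg_Xp tdeg_Yp) auto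
  finally show ?thesis by simp
qed

definition SS :: "complex fps \<Rightarrow> real \<Rightarrow> (real \<times> real) set" where
  "SS xi s = {scaleR (1 / real k) (vplus xi s f) | k f. k \<ge> 1 \<and> f \<noteq> 0 \<and> tdeg f \<le> k}"

lemma Delta_SS: "Delta_plus xi s = closure (convex hull SS xi s)"
  unfolding Delta_plus_def SS_def ..

lemma SS_I: "k \<ge> 1 \<Longrightarrow> f \<noteq> 0 \<Longrightarrow> tdeg f \<le> k \<Longrightarrow> scaleR (1 / real k) (vplus xi s f) \<in> SS xi s"
  unfolding SS_def by blast

lemma Delta_small:
  assumes s: "1 \<le> s" "s < 2" and xi0: "xi $ 0 = 0" and xi1: "xi $ 1 = 0"
  shows "Delta_plus xi s = triangle 1 s 1"
  unfolding Delta_SS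
proof (rule Delta_from)
  have s': "0 < s" "s < 2" using s by auto
  show "SS xi s \<subseteq> triangle 1 s 1"
  proof
    fix p assume "p \<in> SS xi s"
    then obtain k f where p: "p = scaleR (1 / real k) (vplus xi s f)" and k: "k \<ge> 1" and f: "f \<noteq> 0" "tdeg f \<le> k"
      unfolding SS_def by blast
    obtain a b where ab: "a + b \<le> k" "vplus xi s f = (real a + s * real b, real b)"
      using thmA[OF s' xi0 xi1 f] by blast
    have kp: "real k > 0" using k by simp
    show "p \<in> triangle 1 s 1" unfolding tri_param
    proof (intro exI conjI)
      show "real a / real k \<ge> 0" "real b / real k \<ge> 0" by simp_all
      show "real a / real k + real b / real k \<le> 1" using ab(1) kp
        by (simp add: add_divide_distrib[symmetric] divide_le_eq_1)
      show "p = (real a / real k * 1 + real b / real k * s, real b / real k * 1)"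
        unfolding p ab(2) using kp by (simp add: field_simps)
    qed
  qed
  have v: "scaleR (1 / real 1) (vplus xi s (monA (a, b))) \<in> SS xi s" if "a + b \<le> 1" for a b
    using that monA_ne monA_tdeg[of a b] by (intro SS_I) auto
  show "{(0, 0), (1, 0), (s, 1)} \<subseteq> SS xi s"
    using v[of 0 0] v[of 1 0] v[of 0 1] monA_vplus[OF s' xi0 xi1] by auto
qed

locale mainL = conicB +
  assumes tdegQ: "tdeg Q = 2" and Qne: "Q \<noteq> 0"
begin

lemma monB_ne: "monB (m, b, e) Q \<noteq> 0" using Qne by (simp add: monB_def Xp_def Yp_def)
lemma monB_tdeg: "tdeg (monB (m, b, e) Q) \<le> e + b + 2 * m"
proof -
  have "tdeg (monB (m, b, e) Q) \<le> tdeg (Xp ^ e * Yp ^ b) + tdeg (Q ^ m)" unfolding monB_def by (simp add: tdeg_mult)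
  also have "\<dots> \<le> (tdeg (Xp ^ e) + tdeg (Yp ^ b)) + tdeg (Q ^ m)" by (intro add_mono tdeg_mult) simp
  also have "\<dots> \<le> (e * tdeg Xp + b * tdeg Yp) + m * tdeg Q" by (intro add_mono tdeg_power)
  also have "\<dots> \<le> (e * 1 + b * 1) + m * 2" using tdegQ by (intro add_mono mult_left_mono tdeg_Xp tdeg_Yp) auto
  finally show ?thesis by simp
qed

lemma Delta_big:
  assumes s: "2 \<le> s"
  shows "Delta_plus xi s = triangle 2 (s/2) (1/2)"
  unfolding Delta_SS
proof (rule Delta_from)
  show "SS xi s \<subseteq> triangle 2 (s/2) (1/2)"
  proof
    fix p assume "p \<in> SS xi s"
    then obtain k f where p: "p = scaleR (1 / real k) (vplus xi s f)" and k: "k \<ge> 1" and f: "f \<noteq> 0" "tdeg f \<le> k"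
      unfolding SS_def by blast
    obtain m b e where mbe: "e \<le> 1" "2 * m + b + e \<le> k"
      "vplus xi s f = (real e + 2 * real b + s * real m, real m)"
      using thmB[OF s f] by blast
    have kp: "real k > 0" using k by simp
    have le: "real e + 2 * real b + 4 * real m \<le> 2 * real k" using mbe(1,2) by linarith
    show "p \<in> triangle 2 (s/2) (1/2)" unfolding tri_param
    proof (intro exI conjI)
      show "(real e + 2 * real b) / (2 * real k) \<ge> 0" "2 * real m / real k \<ge> 0" by simp_all
      show "(real e + 2 * real b) / (2 * real k) + 2 * real m / real k \<le> 1" using le kp
        by (simp add: field_simps)
      show "p = ((real e + 2 * real b) / (2 * real k) * 2 + 2 * real m / real k * (s / 2), 2 * real m / real k * (1 / 2))"
        unfolding p mbe(3) using kp by (simp add: field_simps)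
    qed
  qed
  have v: "scaleR (1 / real k) (vplus xi s (monB (m, b, e) Q)) \<in> SS xi s" if "e + b + 2 * m \<le> k" "k \<ge> 1" for m b e k
    using that monB_ne monB_tdeg[of m b e] by (intro SS_I) auto
  show "{(0, 0), (2, 0), (s / 2, 1 / 2)} \<subseteq> SS xi s"
    using v[where m=0 and b=0 and e=0 and k=1] v[where m=0 and b=1 and e=0 and k=1]
      v[where m=1 and b=0 and e=0 and k=2] monB_vplus[OF s] by auto
qed

end


definition MM :: "real \<Rightarrow> real" where "MM s = (if s < 2 then s else max 2 (s / 2))"
definition Dl :: "real \<Rightarrow> (real \<times> real) set" where
  "Dl s = (if s < 2 then triangle 1 s 1 else triangle 2 (s/2) (1/2))"

lemma v1_fst: "v1 xi s f = fst (vplus xi s f)" by (simp add: vplus_def)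

lemma MM_sqrt: "1 \<le> s \<Longrightarrow> (MM s = sqrt s \<longleftrightarrow> s = 1 \<or> s = 4)"
proof -
  assume s: "1 \<le> s"
  have key: "y \<ge> 0 \<Longrightarrow> (y = sqrt s \<longleftrightarrow> y ^ 2 = s)" for y
    using s real_sqrt_unique[of y s] real_sqrt_pow2[of s] by auto
  show ?thesis
  proof (cases "s < 2")
    case True
    then have "MM s = s" by (simp add: MM_def)
    moreover have "s ^ 2 = s \<longleftrightarrow> s = 1" using s by (simp add: power2_eq_square)
    moreover have "s \<noteq> 4" using True by simp
    ultimately show ?thesis using key[of s] s by simp
  next
    case False
    show ?thesis
    proof (cases "s \<le> 4")
      case True
      then have "MM s = 2" using False by (simp add: MM_def)
      moreover have "(2::real) ^ 2 = s \<longleftrightarrow> s = 4" by auto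
      moreover have "s \<noteq> 1" using False by simp
      ultimately show ?thesis using key[of 2] by simp
    next
      case F2: False
      then have "MM s = s / 2" using False by (simp add: MM_def)
      moreover have "(s / 2) ^ 2 \<noteq> s"
      proof
        assume "(s / 2) ^ 2 = s"
        then have "s * s = 4 * s" by (simp add: power2_eq_square field_simps)
        then have "s = 4" using s by simp
        then show False using F2 by simp
      qed
      moreover have "s \<noteq> 1" "s \<noteq> 4" using F2 s by auto
      ultimately show ?thesis using key[of "s/2"] s by simp
    qed
  qed
qed

context mainL begin

lemma Delta_Dl: "1 \<le> s \<Longrightarrow> Delta_plus xi s = Dl s"
  unfolding Dl_def using Delta_small[OF _ _ xi0 xi1] Delta_big by auto

lemma v1_le:
  assumes s: "1 \<le> s" and f: "f \<noteq> 0" "tdeg f \<le> k"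
  shows "v1 xi s f \<le> MM s * real k"
proof (cases "s < 2")
  case True
  obtain a b where ab: "a + b \<le> k" "vplus xi s f = (real a + s * real b, real b)"
    using thmA[of s xi f k] True s xi0 xi1 f by auto
  have "real a + real b \<le> real k" using ab(1) by linarith
  have "real a \<le> s * real a" using s by (simp add: mult_le_cancel_right1)
  then have "real a + s * real b \<le> s * real a + s * real b" by linarith
  also have "\<dots> = s * (real a + real b)" by (simp add: algebra_simps)
  also have "\<dots> \<le> s * real k" using s \<open>real a + real b \<le> real k\<close> by (intro mult_left_mono) auto
  finally have "real a + s * real b \<le> s * real k" .
  then show ?thesis using True ab(2) by (simp add: v1_fst MM_def)
next
  case False
  define Mx where "Mx = max 2 (s / 2)"
  obtain m b e where mbe: "e \<le> 1" "2 * m + b + e \<le> k"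
    "vplus xi s f = (real e + 2 * real b + s * real m, real m)"
    using thmB[of s f k] False f by auto
  have M2: "Mx \<ge> 2" "Mx \<ge> s / 2" unfolding Mx_def by auto
  have "real e \<le> Mx * real e" using M2 by (simp add: mult_le_cancel_right1)
  moreover have "2 * real b \<le> Mx * real b" using M2 by (intro mult_right_mono) auto
  moreover have "s * real m \<le> Mx * (2 * real m)" using M2 mult_right_mono[of "s/2" Mx "2 * real m"] by simp
  moreover have "real e + real b + 2 * real m \<le> real k" using mbe(2) by linarith
  ultimately have "real e + 2 * real b + s * real m \<le> Mx * real e + Mx * real b + Mx * (2 * real m)"
    by linarith
  also have "\<dots> = Mx * (real e + real b + 2 * real m)" by (simp add: algebra_simps)
  also have "\<dots> \<le> Mx * real k" using M2 \<open>real e + real b + 2 * real m \<le> real k\<close> by (intro mult_left_mono) auto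
  finally have "real e + 2 * real b + s * real m \<le> Mx * real k" .
  then show ?thesis using False mbe(3) by (simp add: v1_fst MM_def Mx_def)
qed

lemma v1_wit:
  assumes s: "1 \<le> s" and k: "k \<ge> 1"
  shows "\<exists>f. f \<noteq> 0 \<and> tdeg f \<le> k \<and> MM s * real k - s \<le> v1 xi s f"
proof (cases "s < 2")
  case True
  have "vplus xi s (monA (0, k)) = (s * real k, real k)"
    using monA_vplus[of s xi 0 k] True s xi0 xi1 by simp
  then show ?thesis using monA_ne[of 0 k] monA_tdeg[of 0 k] True s
    by (intro exI[of _ "monA (0, k)"]) (auto simp: v1_fst MM_def)
next
  case False
  show ?thesis
  proof (cases "s \<le> 4")
    case True
    have "vplus xi s (monB (0, k, 0) Q) = (2 * real k, 0)"
      using monB_vplus[of s 0 k 0] False by simp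
    then show ?thesis using monB_ne[of 0 k 0] monB_tdeg[of 0 k 0] True False s
      by (intro exI[of _ "monB (0, k, 0) Q"]) (auto simp: v1_fst MM_def)
  next
    case F2: False
    define m where "m = k div 2"
    have "vplus xi s (monB (m, 0, 0) Q) = (s * real m, real m)"
      using monB_vplus[of s m 0 0] False by simp
    moreover have "2 * m \<le> k" unfolding m_def by simp
    moreover have "real k \<le> 2 * real m + 1" unfolding m_def by linarith
    moreover have "MM s = s / 2" using False F2 by (simp add: MM_def)
    moreover have "s * real k \<le> s * (2 * real m + 1)"
      using \<open>real k \<le> 2 * real m + 1\<close> s by (intro mult_left_mono) auto
    ultimately have "MM s * real k - s \<le> v1 xi s (monB (m, 0, 0) Q)"
    proof -
      assume vp: "vplus xi s (monB (m, 0, 0) Q) = (s * real m, real m)" and M: "MM s = s / 2"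
        and sk: "s * real k \<le> s * (2 * real m + 1)"
      have "MM s * real k = (s * real k) / 2" using M by simp
      moreover have "v1 xi s (monB (m, 0, 0) Q) = s * real m" using vp by (simp add: v1_fst)
      moreover have "s * (2 * real m + 1) = 2 * (s * real m) + s" by (simp add: algebra_simps)
      ultimately show ?thesis using sk s by linarith
    qed
    then show ?thesis using monB_ne[of m 0 0] monB_tdeg[of m 0 0] \<open>2 * m \<le> k\<close>
      by (intro exI[of _ "monB (m, 0, 0) Q"]) auto
  qed
qed

lemma muhat_eq:
  assumes s: "1 \<le> s"
  shows "muhat xi s = MM s"
proof -
  define A where "A k = {v1 xi s f | f. f \<noteq> 0 \<and> tdeg f \<le> k}" for k
  define g where "g k = (1 / real k) * Sup (A k)" for k
  have bnd: "MM s - s / real k \<le> g k \<and> g k \<le> MM s" if k: "k \<ge> 1" for k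
  proof -
    have bdd: "bdd_above (A k)" unfolding A_def bdd_above_def
      using v1_le[OF s] by blast
    obtain f where f: "f \<noteq> 0" "tdeg f \<le> k" "MM s * real k - s \<le> v1 xi s f"
      using v1_wit[OF s k] by blast
    have ne: "A k \<noteq> {}" using f unfolding A_def by blast
    have up: "Sup (A k) \<le> MM s * real k"
      using ne by (rule cSup_least) (auto simp: A_def intro: v1_le[OF s])
    have lo: "MM s * real k - s \<le> Sup (A k)"
      using f bdd by (intro cSup_upper2[of "v1 xi s f"]) (auto simp: A_def)
    have kp: "real k > 0" using k by simp
    have "g k \<le> (1 / real k) * (MM s * real k)" unfolding g_def using up kp by (intro mult_left_mono) auto
    moreover have "(1 / real k) * (MM s * real k - s) \<le> g k" unfolding g_def using lo kp by (intro mult_left_mono) auto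
    ultimately show ?thesis using kp by (simp add: field_simps)
  qed
  have "g \<longlonglongrightarrow> MM s"
  proof (rule real_tendsto_sandwich)
    show "\<forall>\<^sub>F k in sequentially. MM s - s / real k \<le> g k"
      using bnd by (intro eventually_sequentiallyI[of 1]) auto
    show "\<forall>\<^sub>F k in sequentially. g k \<le> MM s"
      using bnd by (intro eventually_sequentiallyI[of 1]) auto
    have "(\<lambda>k. MM s - s / real k) \<longlonglongrightarrow> MM s - 0"
      by (intro tendsto_diff tendsto_const lim_const_over_n)
    then show "(\<lambda>k. MM s - s / real k) \<longlonglongrightarrow> MM s" by simp
  qed simp
  then have "lim g = MM s" by (rule limI)
  then show ?thesis unfolding muhat_def g_def A_def .
qed

lemma cont:
  assumes s0: "1 < s0" "s0 < 4" "s0 \<noteq> 2"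
  shows "Delta_continuous_at xi s0"
  unfolding Delta_continuous_at_def
proof (intro allI impI)
  fix \<epsilon> :: real assume e: "\<epsilon> > 0"
  show "\<exists>\<delta>>0. \<forall>s\<in>\<rat>. \<bar>s - s0\<bar> < \<delta> \<longrightarrow>
        (\<forall>v. v extreme_point_of Delta_plus xi s \<longrightarrow> infdist v (frontier (Delta_plus xi s0)) < \<epsilon>)"
  proof (cases "s0 < 2")
    case True
    define \<delta> where "\<delta> = min \<epsilon> (min (s0 - 1) (2 - s0))"
    have dp: "\<delta> > 0" using e s0 True by (simp add: \<delta>_def)
    show ?thesis
    proof (intro exI[of _ \<delta>] conjI dp ballI impI allI)
      fix s v assume "s \<in> \<rat>" and sd: "\<bar>s - s0\<bar> < \<delta>" and v: "v extreme_point_of Delta_plus xi s"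
      have sr: "1 < s" "s < 2" "\<bar>s - s0\<bar> < \<epsilon>" using sd unfolding \<delta>_def by auto
      have D: "Delta_plus xi s = triangle 1 s 1" using Delta_Dl[of s] sr by (simp add: Dl_def)
      have D0: "Delta_plus xi s0 = triangle 1 s0 1" using Delta_Dl[of s0] s0 True by (simp add: Dl_def)
      have s0ge: "s0 \<ge> 0" using s0 by simp
      note fr = tri_frontier[of 1 s0 1, OF zero_less_one s0ge zero_less_one]
      have "v \<in> {(0,0), (1,0), (s,1)}" using v unfolding D by (rule tri_extreme)
      then show "infdist v (frontier (Delta_plus xi s0)) < \<epsilon>"
      proof (elim insertE)
        assume "v = (0,0)" then show ?thesis unfolding D0
          using infdist_le[OF fr(1), of v] e by auto
      next
        assume "v = (1,0)" then show ?thesis unfolding D0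
          using infdist_le[OF fr(2), of v] e by auto
      next
        assume "v = (s,1)"
        moreover have "dist (s, 1::real) (s0, 1) = \<bar>s - s0\<bar>" by (simp add: dist_Pair_Pair dist_real_def)
        ultimately show ?thesis unfolding D0
          using infdist_le[OF fr(3), of v] sr by auto
      qed simp
    qed
  next
    case False
    then have s02: "s0 > 2" using s0 by simp
    define \<delta> where "\<delta> = min \<epsilon> (s0 - 2)"
    have dp: "\<delta> > 0" using e s02 by (simp add: \<delta>_def)
    show ?thesis
    proof (intro exI[of _ \<delta>] conjI dp ballI impI allI)
      fix s v assume "s \<in> \<rat>" and sd: "\<bar>s - s0\<bar> < \<delta>" and v: "v extreme_point_of Delta_plus xi s"
      have sr: "2 < s" "\<bar>s - s0\<bar> < \<epsilon>" using sd unfolding \<delta>_def by auto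
      have D: "Delta_plus xi s = triangle 2 (s/2) (1/2)" using Delta_Dl[of s] sr by (simp add: Dl_def)
      have D0: "Delta_plus xi s0 = triangle 2 (s0/2) (1/2)" using Delta_Dl[of s0] s02 by (simp add: Dl_def)
      have s0ge: "s0 / 2 \<ge> 0" "(2::real) > 0" "(1/2::real) > 0" using s02 by simp_all
      note fr = tri_frontier[of 2 "s0/2" "1/2", OF s0ge(2) s0ge(1) s0ge(3)]
      have "v \<in> {(0,0), (2,0), (s/2,1/2)}" using v unfolding D by (rule tri_extreme)
      then show "infdist v (frontier (Delta_plus xi s0)) < \<epsilon>"
      proof (elim insertE)
        assume "v = (0,0)" then show ?thesis unfolding D0
          using infdist_le[OF fr(1), of v] e s02 by auto
      next
        assume "v = (2,0)" then show ?thesis unfolding D0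
          using infdist_le[OF fr(2), of v] e s02 by auto
      next
        assume "v = (s/2,1/2)"
        moreover have "dist (s/2, 1/2::real) (s0/2, 1/2) = \<bar>s - s0\<bar> / 2"
        proof -
          have "\<bar>s/2 - s0/2\<bar> = \<bar>s - s0\<bar> / 2" by (simp add: abs_if field_simps)
          then show ?thesis by (simp add: dist_Pair_Pair dist_real_def)
        qed
        ultimately show ?thesis unfolding D0
          using infdist_le[OF fr(3), of v] sr s02 by auto
      qed simp
    qed
  qed
qed

lemma not_cont2: "\<not> Delta_continuous_at xi 2"
  unfolding Delta_continuous_at_def
proof
  assume H: "\<forall>\<epsilon>>0. \<exists>\<delta>>0. \<forall>s\<in>\<rat>. \<bar>s - 2\<bar> < \<delta> \<longrightarrow>
        (\<forall>v. v extreme_point_of Delta_plus xi s \<longrightarrow> infdist v (frontier (Delta_plus xi 2)) < \<epsilon>)"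
  obtain \<delta> where dp: "\<delta> > 0" and H2: "\<forall>s\<in>\<rat>. \<bar>s - 2\<bar> < \<delta> \<longrightarrow>
        (\<forall>v. v extreme_point_of Delta_plus xi s \<longrightarrow> infdist v (frontier (Delta_plus xi 2)) < 1/2)"
    using H[rule_format, of "1/2"] by auto
  obtain s where sQ: "s \<in> \<rat>" and sr: "max (2 - \<delta>) (3/2) < s" "s < 2"
    using Rats_dense_in_real[of "max (2 - \<delta>) (3/2)" 2] dp by auto
  have D: "Delta_plus xi s = triangle 1 s 1" using Delta_Dl[of s] sr by (simp add: Dl_def)
  have D2: "Delta_plus xi 2 = triangle 2 1 (1/2)" using Delta_Dl[of 2] by (simp add: Dl_def)
  have ext: "(s, 1) extreme_point_of Delta_plus xi s" unfolding D by (rule tri_top_extreme) simp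
  have "infdist (s, 1) (frontier (Delta_plus xi 2)) < 1/2"
    using H2 sQ sr ext by auto
  moreover have "infdist (s, 1) (frontier (Delta_plus xi 2)) \<ge> 1/2"
  proof -
    let ?F = "frontier (triangle 2 1 (1/2::real))"
    have ne: "?F \<noteq> {}" using tri_frontier(1)[of 2 1 "1/2"] by auto
    have sub: "?F \<subseteq> triangle 2 1 (1/2)" by (rule frontier_subset_closed[OF tri_closed])
    have "1/2 \<le> (INF a\<in>?F. dist (s, 1) a)"
    proof (rule cINF_greatest[OF ne])
      fix a assume "a \<in> ?F"
      then have "snd a \<le> 1/2" using sub tri_snd_le[of a 2 1 "1/2"] by auto
      moreover have "dist (snd (s, 1::real)) (snd a) \<le> dist (s, 1) a" by (rule dist_snd_le)
      ultimately show "1/2 \<le> dist (s, 1) a" by (simp add: dist_real_def)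
    qed
    then show ?thesis unfolding D2 using infdist_notempty[OF ne] by simp
  qed
  ultimately show False by simp
qed

end


theorem proposition5p24:
  fixes Q :: bipoly and xi :: "complex fps"
  assumes conic: "tdeg Q = 2" and irred: "irreducible Q"
    and through_O: "val_O Q = 0"
    and smooth_O: "(dx_O Q, dy_O Q) \<noteq> (0, 0)"
    and tangent: "dx_O Q = 0"
    and xi0: "fps_nth xi 0 = 0" and xi1: "fps_nth xi 1 = 0"
    and branch: "subst_branch xi Q = 0"
  shows "(\<forall>s\<in>\<rat>. s \<ge> 1 \<longrightarrow>
            Delta_plus xi s = (if s < 2 then triangle 1 s 1 else triangle 2 (s/2) (1/2)))
       \<and> (\<forall>s0\<in>\<rat>. Delta_mutates_at xi 2 s0 \<longleftrightarrow> s0 = 2)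
       \<and> (\<forall>s\<in>\<rat>. s \<ge> 1 \<longrightarrow> (v1_minimal xi s \<longleftrightarrow> s = 1 \<or> s = 4))"
proof -
  have C: "conicB Q xi (dy_O Q) (poly.coeff (coeff Q 1) 1) (poly.coeff (coeff Q 2) 0) (poly.coeff (coeff Q 0) 2)"
    by (rule conic_setup[OF assms])
  have Qne: "Q \<noteq> 0" using irred by auto
  interpret mainL Q xi "dy_O Q" "poly.coeff (coeff Q 1) 1" "poly.coeff (coeff Q 2) 0" "poly.coeff (coeff Q 0) 2"
    by (rule mainL.intro[OF C mainL_axioms.intro[OF conic Qne]])
  have P1: "\<forall>s\<in>\<rat>. s \<ge> 1 \<longrightarrow>
            Delta_plus xi s = (if s < 2 then triangle 1 s 1 else triangle 2 (s/2) (1/2))"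
    using Delta_Dl by (auto simp: Dl_def)
  have P2: "\<forall>s0\<in>\<rat>. Delta_mutates_at xi 2 s0 \<longleftrightarrow> s0 = 2"
  proof (intro ballI iffI)
    fix s0 :: real assume "Delta_mutates_at xi 2 s0"
    then have "1 < s0" "s0 < 4" "\<not> Delta_continuous_at xi s0" unfolding Delta_mutates_at_def by auto
    then show "s0 = 2" using cont by blast
  next
    fix s0 :: real assume "s0 = 2"
    then show "Delta_mutates_at xi 2 s0" unfolding Delta_mutates_at_def using not_cont2 by simp
  qed
  have P3: "\<forall>s\<in>\<rat>. s \<ge> 1 \<longrightarrow> (v1_minimal xi s \<longleftrightarrow> s = 1 \<or> s = 4)"
    unfolding v1_minimal_def using muhat_eq MM_sqrt by auto
  show ?thesis using P1 P2 P3 by blast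
qed


end
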